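(* Let $\mathfrak{A}=(Q,\Sigma,Q_0,\Delta,F)$ be a non-confluent Büchi automaton with $n=|Q|$ states and let $\mathcal{O}=\{(F_1,b_1),\ldots,(F_k,b_k)\}\subseteq 2^Q\times\mathbb{N}_+$. There exists a deterministic parity automaton $\mathfrak{P}$ over $\Sigma$ such that (1) $\mathfrak{P}$ accepts $w$ if and only if $\mathfrak{A}$ has an accepting run $\rho$ on $w$ such that for every $j\in\{1,\ldots,k\}$ every infix of $\rho$ of length $b_j$ contains at least one state from $F_j$; and (2) $|\mathfrak{P}|\le 2^{(n+1)^2}\cdot\left(\prod_{j=1}^k(b_j+1)\right)^{n}$ and $\mathfrak{P}$ uses at most $2n+1$ priorities.
   Context: A Büchi automaton $(Q,\Sigma,Q_0,\Delta,F)$ has finite state set $Q$, initial states $Q_0$, transitions $\Delta\subseteq Q\times\Sigma\times Q$, and accepts runs $q_0q_1\cdots$ ($q_0\in Q_0$, $(q_m,w_m,q_{m+1})\in\Delta$) visiting $F$ infinitely often. It is non-confluent if for every word $w$ and any two runs $q_0q_1\cdots$ and $q_0'q_1'\cdots$ on $w$, $q_m=q_m'$ implies $q_{m'}=q_{m'}'$ for all $m'<m$. A deterministic parity automaton $(Q',\Sigma,q_0',\delta,c)$ has transition function $\delta\colon Q'\times\Sigma\to Q'$ and priority function $c\colon Q'\to\mathbb{N}$, and accepts a word iff the minimal priority seen infinitely often on its run is even; its size is $|Q'|$ and its number of priorities is $|c(Q')|$. *)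

theory Defs
  imports Main
begin

definition omega_word :: "'a set \<Rightarrow> (nat \<Rightarrow> 'a) \<Rightarrow> bool" where
  "omega_word Sig w \<longleftrightarrow> (\<forall>m. w m \<in> Sig)"

definition buchi_wf :: "'q set \<Rightarrow> 'a set \<Rightarrow> 'q set \<Rightarrow> ('q \<times> 'a \<times> 'q) set \<Rightarrow> 'q set \<Rightarrow> bool" where
  "buchi_wf Q Sig Q0 Delta F \<longleftrightarrow> finite Q \<and> finite Sig \<and> Q0 \<subseteq> Q \<and>
     Delta \<subseteq> Q \<times> Sig \<times> Q \<and> F \<subseteq> Q"

definition buchi_run :: "'q set \<Rightarrow> ('q \<times> 'a \<times> 'q) set \<Rightarrow> (nat \<Rightarrow> 'a) \<Rightarrow> (nat \<Rightarrow> 'q) \<Rightarrow> bool" where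
  "buchi_run Q0 Delta w \<rho> \<longleftrightarrow> \<rho> 0 \<in> Q0 \<and> (\<forall>m. (\<rho> m, w m, \<rho> (Suc m)) \<in> Delta)"

definition buchi_accepting :: "'q set \<Rightarrow> (nat \<Rightarrow> 'q) \<Rightarrow> bool" where
  "buchi_accepting F \<rho> \<longleftrightarrow> (\<exists>\<^sub>\<infinity> m. \<rho> m \<in> F)"

definition non_confluent :: "'q set \<Rightarrow> ('q \<times> 'a \<times> 'q) set \<Rightarrow> bool" where
  "non_confluent Q0 Delta \<longleftrightarrow>
     (\<forall>w \<rho> \<rho>'. buchi_run Q0 Delta w \<rho> \<longrightarrow> buchi_run Q0 Delta w \<rho>' \<longrightarrow>
        (\<forall>m. \<rho> m = \<rho>' m \<longrightarrow> (\<forall>m'<m. \<rho> m' = \<rho>' m')))"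

definition dpa_wf :: "'s set \<Rightarrow> 'a set \<Rightarrow> 's \<Rightarrow> ('s \<Rightarrow> 'a \<Rightarrow> 's) \<Rightarrow> ('s \<Rightarrow> nat) \<Rightarrow> bool" where
  "dpa_wf Q' Sig q0 \<delta> c \<longleftrightarrow> finite Q' \<and> q0 \<in> Q' \<and> (\<forall>q\<in>Q'. \<forall>a\<in>Sig. \<delta> q a \<in> Q')"

fun dpa_run :: "'s \<Rightarrow> ('s \<Rightarrow> 'a \<Rightarrow> 's) \<Rightarrow> (nat \<Rightarrow> 'a) \<Rightarrow> nat \<Rightarrow> 's" where
  "dpa_run q0 \<delta> w 0 = q0"
| "dpa_run q0 \<delta> w (Suc m) = \<delta> (dpa_run q0 \<delta> w m) (w m)"

definition dpa_accepts :: "'s \<Rightarrow> ('s \<Rightarrow> 'a \<Rightarrow> 's) \<Rightarrow> ('s \<Rightarrow> nat) \<Rightarrow> (nat \<Rightarrow> 'a) \<Rightarrow> bool" where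
  "dpa_accepts q0 \<delta> c w \<longleftrightarrow> even (Min {p. \<exists>\<^sub>\<infinity> m. c (dpa_run q0 \<delta> w m) = p})"

definition infix_cond :: "(nat \<Rightarrow> 'q) \<Rightarrow> 'q set \<Rightarrow> nat \<Rightarrow> bool" where
  "infix_cond \<rho> G b \<longleftrightarrow> (\<forall>i. \<exists>m\<in>{i..<i+b}. \<rho> m \<in> G)"

end

theory Submission
  imports Defs "HOL-Library.Infinite_Set" "HOL-Library.FuncSet"
begin


definition descs :: "'q set list \<Rightarrow> nat \<Rightarrow> 'q set" where
  "descs L i = \<Union>{L!j | j. i<j \<and> j<length L \<and> L!j \<subseteq> L!i}"
definition newn :: "'q set \<Rightarrow> 'q set list \<Rightarrow> nat \<Rightarrow> 'q set" where
  "newn F L i = (L!i \<inter> F) - descs L i"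
definition ext :: "'q set \<Rightarrow> ('q set \<Rightarrow> 'q set) \<Rightarrow> 'q set list \<Rightarrow> 'q set list" where
  "ext F D L = map D (L @ map (newn F L) [0..<length L])"
definition green :: "'q set \<Rightarrow> ('q set \<Rightarrow> 'q set) \<Rightarrow> 'q set list \<Rightarrow> nat \<Rightarrow> bool" where
  "green F D L i \<longleftrightarrow> i < length L \<and> ext F D L ! i \<noteq> {} \<and> ext F D L ! i = descs (ext F D L) i"
definition keep :: "'q set \<Rightarrow> ('q set \<Rightarrow> 'q set) \<Rightarrow> 'q set list \<Rightarrow> nat \<Rightarrow> bool" where
  "keep F D L j \<longleftrightarrow> ext F D L ! j \<noteq> {} \<and> \<not>(\<exists>i<j. green F D L i \<and> ext F D L ! j \<subseteq> ext F D L ! i)"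
definition snext :: "'q set \<Rightarrow> ('q set \<Rightarrow> 'q set) \<Rightarrow> 'q set list \<Rightarrow> 'q set list" where
  "snext F D L = map (nth (ext F D L)) (filter (keep F D L) [0..<2*length L])"
definition sprio :: "'q set \<Rightarrow> ('q set \<Rightarrow> 'q set) \<Rightarrow> nat \<Rightarrow> 'q set list \<Rightarrow> nat" where
  "sprio F D N L = Min ({2*i+1 | i. i<length L \<and> \<not> keep F D L i} \<union> {2*i+2 | i. green F D L i} \<union> {2*N+1})"

definition lam :: "'q set list \<Rightarrow> bool" where
  "lam L \<longleftrightarrow> (\<forall>i j. i<j \<longrightarrow> j<length L \<longrightarrow> L!j \<subseteq> L!i \<or> L!i \<inter> L!j = {})"
definition sinv :: "'q set \<Rightarrow> 'q set list \<Rightarrow> bool" where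
  "sinv S L \<longleftrightarrow> (L = [] \<longleftrightarrow> S = {}) \<and> (L \<noteq> [] \<longrightarrow> L!0 = S) \<and>
     (\<forall>i<length L. L!i \<noteq> {} \<and> L!i \<subseteq> S) \<and> lam L \<and> (\<forall>i<length L. L!i \<noteq> descs L i)"
definition dgood :: "('q set \<Rightarrow> 'q set) \<Rightarrow> 'q set \<Rightarrow> 'q set \<Rightarrow> bool" where
  "dgood D S S' \<longleftrightarrow> (\<forall>X Y. X \<subseteq> Y \<longrightarrow> D X \<subseteq> D Y) \<and> (\<forall>X Y. X \<inter> Y = {} \<longrightarrow> D X \<inter> D Y = {})
     \<and> D S = S' \<and> (\<forall>X. D X \<subseteq> S')"

lemma ext_len[simp]: "length (ext F D L) = 2 * length L"
  by (simp add: ext_def)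
lemma ext_old: "i < length L \<Longrightarrow> ext F D L ! i = D (L!i)"
  by (simp add: ext_def nth_append)
lemma ext_new: "i < length L \<Longrightarrow> ext F D L ! (length L + i) = D (newn F L i)"
  by (simp add: ext_def nth_append)

lemma descs_sub: "descs L i \<subseteq> L!i"
  by (auto simp: descs_def)

lemma newn_sub: "newn F L i \<subseteq> L!i" "newn F L i \<subseteq> F"
  by (auto simp: newn_def)

lemma newn_disj_desc: "i < j \<Longrightarrow> j < length L \<Longrightarrow> L!j \<subseteq> L!i \<Longrightarrow> newn F L i \<inter> L!j = {}"
  by (auto simp: newn_def descs_def)

lemma lam_L1:
  assumes "lam L"
  shows "lam (L @ map (newn F L) [0..<length L])"
proof -
  let ?k = "length L"
  let ?M = "L @ map (newn F L) [0..<length L]"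
  have nn: "\<And>i i'. i < i' \<Longrightarrow> i' < ?k \<Longrightarrow> newn F L i \<inter> newn F L i' = {}"
  proof -
    fix i i' assume a: "i < i'" "i' < ?k"
    from assms a have "L!i' \<subseteq> L!i \<or> L!i \<inter> L!i' = {}" by (auto simp: lam_def)
    then show "newn F L i \<inter> newn F L i' = {}"
    proof
      assume "L!i' \<subseteq> L!i"
      with newn_disj_desc[OF a this] newn_sub[of F L i'] show ?thesis by blast
    next
      assume "L!i \<inter> L!i' = {}"
      with newn_sub[of F L i] newn_sub[of F L i'] show ?thesis by blast
    qed
  qed
  have on: "\<And>i i'. i < ?k \<Longrightarrow> i' < ?k \<Longrightarrow> newn F L i' \<subseteq> L!i \<or> L!i \<inter> newn F L i' = {}"
  proof -
    fix i i' assume a: "i < ?k" "i' < ?k"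
    consider "i = i'" | "i < i'" | "i' < i" by linarith
    then show "newn F L i' \<subseteq> L!i \<or> L!i \<inter> newn F L i' = {}"
    proof cases
      case 1 then show ?thesis using newn_sub(1)[of F L i'] by blast
    next
      case 2
      with assms a have "L!i' \<subseteq> L!i \<or> L!i \<inter> L!i' = {}" by (auto simp: lam_def)
      then show ?thesis using newn_sub[of F L i'] by blast
    next
      case 3
      with assms a have "L!i \<subseteq> L!i' \<or> L!i' \<inter> L!i = {}" by (auto simp: lam_def)
      then show ?thesis
      proof
        assume "L!i \<subseteq> L!i'"
        with newn_disj_desc[OF 3 a(1) this] show ?thesis by blast
      next
        assume "L!i' \<inter> L!i = {}" then show ?thesis using newn_sub[of F L i'] by blast
      qed
    qed
  qed
  show ?thesis unfolding lam_def
  proof (intro allI impI)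
    fix i j assume ij: "i < j" "j < length ?M"
    show "?M!j \<subseteq> ?M!i \<or> ?M!i \<inter> ?M!j = {}"
    proof (cases "j < ?k")
      case True
      with ij assms show ?thesis by (auto simp: lam_def nth_append)
    next
      case False
      then obtain j' where j': "j = ?k + j'" "j' < ?k" using ij by (metis add_diff_inverse_nat length_append length_map length_upt minus_nat.diff_0 nat_add_left_cancel_less)
      show ?thesis
      proof (cases "i < ?k")
        case True
        with on[OF True j'(2)] j' show ?thesis by (simp add: nth_append)
      next
        case False
        then obtain i' where i': "i = ?k + i'" "i' < ?k" using ij j' by (metis add_diff_inverse_nat add_less_cancel_left less_trans)
        with ij j' have "i' < j'" by simp
        with nn[OF this j'(2)] i' j' show ?thesis by (simp add: nth_append)
      qed
    qed
  qed
qed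

lemma lam_map:
  assumes "lam L" "dgood D S S'"
  shows "lam (map D L)"
  using assms unfolding lam_def dgood_def by (metis length_map nth_map order.strict_trans)

lemma lam_ext: "lam L \<Longrightarrow> dgood D S S' \<Longrightarrow> lam (ext F D L)"
  unfolding ext_def by (rule lam_map[OF lam_L1]) 

lemma lam_sel:
  assumes "lam M" "sorted_wrt (<) xs" "set xs \<subseteq> {..<length M}"
  shows "lam (map (nth M) xs)"
  unfolding lam_def
proof (intro allI impI)
  fix i j assume ij: "i < j" "j < length (map (nth M) xs)"
  then have "xs!i < xs!j" using assms(2) by (simp add: sorted_wrt_iff_nth_less)
  moreover have "xs!j < length M" using assms(3) ij by (simp add: subset_iff)
  ultimately show "map (nth M) xs ! j \<subseteq> map (nth M) xs ! i \<or> map (nth M) xs ! i \<inter> map (nth M) xs ! j = {}"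
    using assms(1) ij unfolding lam_def by simp
qed

lemma descs_sel:
  assumes "sorted_wrt (<) xs" "set xs \<subseteq> {..<length M}" "p < length xs"
  shows "descs (map (nth M) xs) p \<subseteq> \<Union>{M!j' | j'. xs!p < j' \<and> j' < length M \<and> M!j' \<subseteq> M!(xs!p) \<and> j' \<in> set xs}"
proof
  fix x assume "x \<in> descs (map (nth M) xs) p"
  then obtain q where q: "p < q" "q < length xs" "M!(xs!q) \<subseteq> M!(xs!p)" "x \<in> M!(xs!q)"
    by (auto simp: descs_def)
  have "xs!p < xs!q" using assms(1) q by (simp add: sorted_wrt_iff_nth_less)
  moreover have "xs!q < length M" using assms(2) q by (simp add: subset_iff)
  moreover have "xs!q \<in> set xs" using q by simp
  ultimately show "x \<in> \<Union>{M!j' | j'. xs!p < j' \<and> j' < length M \<and> M!j' \<subseteq> M!(xs!p) \<and> j' \<in> set xs}"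
    using q by blast
qed

lemma newn_disj:
  assumes "lam L" "i < i'" "i' < length L"
  shows "newn F L i \<inter> newn F L i' = {}"
proof -
  from assms have "L!i' \<subseteq> L!i \<or> L!i \<inter> L!i' = {}" by (auto simp: lam_def)
  then show ?thesis
  proof
    assume "L!i' \<subseteq> L!i"
    with newn_disj_desc[OF assms(2,3) this] newn_sub[of F L i'] show ?thesis by blast
  next
    assume "L!i \<inter> L!i' = {}"
    with newn_sub[of F L i] newn_sub[of F L i'] show ?thesis by blast
  qed
qed

lemma filter_upt_pos:
  assumes "P j" "j < n"
  shows "filter P [0..<n] ! card {i. i < j \<and> P i} = j \<and> card {i. i < j \<and> P i} < length (filter P [0..<n])"
proof -
  have split: "[0..<n] = [0..<j] @ [j..<n]" using upt_add_eq_append[of 0 j "n-j"] assms(2) by simp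
  have jn: "[j..<n] = j # [Suc j..<n]" using assms(2) by (simp add: upt_conv_Cons)
  have len: "length (filter P [0..<j]) = card {i. i < j \<and> P i}"
    by (simp add: length_filter_conv_card cong: conj_cong)
  show ?thesis using assms(1) unfolding split jn by (simp add: nth_append len[symmetric])
qed

lemma filter_upt_sorted: "sorted_wrt (<) (filter P [0..<n])"
  by (simp add: sorted_wrt_filter)

lemma filter_upt_set: "set (filter P [0..<n]) = {j. j < n \<and> P j}"
  by auto

lemma dgood_disj: "dgood D S S' \<Longrightarrow> X \<inter> Y = {} \<Longrightarrow> D X \<inter> D Y = {}"
  unfolding dgood_def by blast

lemma dgood_mono: "dgood D S S' \<Longrightarrow> X \<subseteq> Y \<Longrightarrow> D X \<subseteq> D Y"
  unfolding dgood_def by blast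

lemma dgood_empty: "dgood D S S' \<Longrightarrow> D {} = {}"
  unfolding dgood_def by blast

lemma dgood_sub: "dgood D S S' \<Longrightarrow> D X \<subseteq> S'"
  unfolding dgood_def by blast

lemma ext_sub: "dgood D S S' \<Longrightarrow> j < 2 * length L \<Longrightarrow> ext F D L ! j \<subseteq> S'"
  unfolding ext_def by (subst nth_map) (auto simp: dgood_sub simp del: map_append)

lemma snext_nth: "p < length (snext F D L) \<Longrightarrow> snext F D L ! p = ext F D L ! (filter (keep F D L) [0..<2*length L] ! p)"
  by (simp add: snext_def)

lemma snext_len: "length (snext F D L) = length (filter (keep F D L) [0..<2*length L])"
  by (simp add: snext_def)

lemma snext_pos:
  assumes "keep F D L j" "j < 2 * length L"
  shows "card {i. i < j \<and> keep F D L i} < length (snext F D L) \<and>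
         snext F D L ! card {i. i < j \<and> keep F D L i} = ext F D L ! j"
  using filter_upt_pos[of "keep F D L" j "2 * length L", OF assms] by (simp add: snext_def)

lemma snext_idx:
  assumes "p < length (snext F D L)"
  shows "keep F D L (filter (keep F D L) [0..<2*length L] ! p) \<and> filter (keep F D L) [0..<2*length L] ! p < 2 * length L"
proof -
  have "filter (keep F D L) [0..<2*length L] ! p \<in> set (filter (keep F D L) [0..<2*length L])"
    using assms unfolding snext_len by (rule nth_mem)
  moreover have "set (filter (keep F D L) [0..<2*length L]) = {j. j<2*length L \<and> keep F D L j}" by (rule filter_upt_set)
  ultimately show ?thesis by blast
qed

lemma new_desc_empty:
  assumes "lam L" "dgood D S S'" "length L \<le> j" "j < 2 * length L"
  shows "descs (ext F D L) j = {}"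
proof -
  have key: "ext F D L ! j' = {}" if a: "j < j'" "j' < 2 * length L" "ext F D L ! j' \<subseteq> ext F D L ! j" for j'
  proof -
    obtain i where i: "j = length L + i" "i < length L"
      using assms(3,4) by (intro that[of "j - length L"]) simp_all
    obtain i' where i': "j' = length L + i'" "i' < length L"
      using a assms(3) by (intro that[of "j' - length L"]) simp_all
    have ii: "i < i'" using a i i' by simp
    have dd: "D (newn F L i) \<inter> D (newn F L i') = {}"
      by (rule dgood_disj[OF assms(2) newn_disj[OF assms(1) ii i'(2)]])
    have e1: "ext F D L ! j = D (newn F L i)" unfolding i(1) by (rule ext_new[OF i(2)])
    have e2: "ext F D L ! j' = D (newn F L i')" unfolding i'(1) by (rule ext_new[OF i'(2)])
    show ?thesis using a(3) dd e1 e2 by blast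
  qed
  show ?thesis unfolding descs_def using key by auto
qed

lemma sinv_step:
  assumes inv: "sinv S L" and dg: "dgood D S S'"
  shows "sinv S' (snext F D L)"
proof -
  let ?M = "ext F D L"
  let ?ks = "filter (keep F D L) [0..<2*length L]"
  let ?N = "snext F D L"
  have lamL: "lam L" using inv by (simp add: sinv_def)
  have lamM: "lam ?M" by (rule lam_ext[OF lamL dg])
  have N_def: "?N = map (nth ?M) ?ks" by (simp add: snext_def)
  have ks_sorted: "sorted_wrt (<) ?ks" by (rule filter_upt_sorted)
  have ks_set: "set ?ks \<subseteq> {..<length ?M}" by auto
  have D0: "D {} = {}" using dgood_empty[OF dg] .
  have A: "(?N = [] \<longleftrightarrow> S' = {}) \<and> (?N \<noteq> [] \<longrightarrow> ?N!0 = S')"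
  proof (cases "S' = {}")
    case True
    then have "\<forall>j < 2*length L. \<not> keep F D L j" using ext_sub[OF dg] unfolding keep_def by blast
    then have "?ks = []" by (simp add: filter_empty_conv)
    then show ?thesis using True by (simp add: N_def)
  next
    case False
    have "D S = S'" using dg by (simp add: dgood_def)
    then have "L \<noteq> []" using inv D0 False unfolding sinv_def by auto
    then have L0: "L!0 = S" and lpos: "0 < length L" using inv by (auto simp: sinv_def)
    have "D S = S'" using dg by (simp add: dgood_def)
    then have M0: "?M!0 = S'" using ext_old[OF lpos] L0 by simp
    have k0: "keep F D L 0" using M0 False by (simp add: keep_def)
    from snext_pos[OF k0] lpos have "0 < length ?N \<and> ?N!0 = S'" using M0 by simp
    then show ?thesis using False by auto
  qed
  have B: "\<forall>p<length ?N. ?N!p \<noteq> {} \<and> ?N!p \<subseteq> S'"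
  proof (intro allI impI)
    fix p assume p: "p < length ?N"
    from snext_idx[OF p] snext_nth[OF p] ext_sub[OF dg] show "?N!p \<noteq> {} \<and> ?N!p \<subseteq> S'"
      by (simp add: keep_def)
  qed
  have C: "lam ?N" unfolding N_def by (rule lam_sel[OF lamM ks_sorted ks_set])
  have E: "\<forall>p<length ?N. ?N!p \<noteq> descs ?N p"
  proof (intro allI impI)
    fix p assume p: "p < length ?N"
    let ?j = "?ks ! p"
    have kj: "keep F D L ?j" "?j < 2*length L" using snext_idx[OF p] by auto
    have Np: "?N!p = ?M!?j" using snext_nth[OF p] .
    have ne: "?M!?j \<noteq> {}" using kj by (simp add: keep_def)
    have pk: "p < length ?ks" using p by (simp add: snext_len)
    have sub: "descs ?N p \<subseteq> \<Union>{?M!j' | j'. ?j < j' \<and> j' < length ?M \<and> ?M!j' \<subseteq> ?M!?j \<and> j' \<in> set ?ks}"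
      unfolding N_def by (rule descs_sel[OF ks_sorted ks_set pk])
    show "?N!p \<noteq> descs ?N p"
    proof (cases "green F D L ?j")
      case True
      have nk: "\<not> keep F D L j'" if "?j < j'" "?M!j' \<subseteq> ?M!?j" for j'
        unfolding keep_def using True that by auto
      have ks: "j' \<in> set ?ks \<Longrightarrow> keep F D L j'" for j' by simp
      have "descs ?N p = {}"
      proof (rule equals0I)
        fix x assume "x \<in> descs ?N p"
        with sub have "x \<in> \<Union>{?M!j' | j'. ?j < j' \<and> j' < length ?M \<and> ?M!j' \<subseteq> ?M!?j \<and> j' \<in> set ?ks}"
          by (rule subsetD)
        then obtain j' where j': "?j < j'" "?M!j' \<subseteq> ?M!?j" "j' \<in> set ?ks"
          by auto
        show False using nk[OF j'(1,2)] ks[OF j'(3)] by simp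
      qed
      then show ?thesis using Np ne by simp
    next
      case False
      have ndesc: "?M!?j \<noteq> descs ?M ?j"
      proof (cases "?j < length L")
        case True then show ?thesis using False ne by (simp add: green_def)
      next
        case False2: False
        have "descs ?M ?j = {}" by (rule new_desc_empty[OF lamL dg]) (use False2 kj in auto)
        then show ?thesis using ne by simp
      qed
      have "\<Union>{?M!j' | j'. ?j < j' \<and> j' < length ?M \<and> ?M!j' \<subseteq> ?M!?j \<and> j' \<in> set ?ks} \<subseteq> descs ?M ?j"
        unfolding descs_def by (rule Union_mono) auto
      then have d1: "descs ?N p \<subseteq> descs ?M ?j" using sub by (rule subset_trans[rotated])
      have d2: "descs ?M ?j \<subseteq> ?M!?j" by (rule descs_sub)
      show ?thesis
      proof
        assume "?N!p = descs ?N p"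
        then have "?M!?j \<subseteq> descs ?M ?j" using Np d1 by simp
        then show False using d2 ndesc by (simp add: subset_antisym)
      qed
    qed
  qed
  show ?thesis unfolding sinv_def using A B C E by (intro conjI) simp_all
qed

lemma sinv_len:
  assumes "sinv S L" "finite S"
  shows "length L \<le> card S"
proof -
  have lamL: "lam L" using assms(1) unfolding sinv_def by blast
  define f where "f i = (SOME x. x \<in> L!i \<and> x \<notin> descs L i)" for i
  have fi: "f i \<in> L!i \<and> f i \<notin> descs L i" if "i < length L" for i
  proof -
    have "L!i \<noteq> descs L i" using assms(1) that unfolding sinv_def by blast
    moreover have "descs L i \<subseteq> L!i" by (rule descs_sub)
    ultimately have "\<exists>x. x \<in> L!i \<and> x \<notin> descs L i" by blast
    then show ?thesis unfolding f_def by (rule someI_ex)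
  qed
  have nd: "x \<notin> L!j" if "i < j" "j < length L" "L!j \<subseteq> L!i" "x \<notin> descs L i" for i j x
  proof
    assume "x \<in> L!j"
    then have "x \<in> descs L i" unfolding descs_def using that(1-3) by blast
    with that(4) show False by simp
  qed
  have lt: False if "i < j" "j < length L" "f i = f j" for i j
  proof -
    have ij: "L!j \<subseteq> L!i \<or> L!i \<inter> L!j = {}" using lamL that(1,2) unfolding lam_def by blast
    have "f j \<in> L!j" using fi[of j] that(2) by blast
    moreover have "i < length L" using that(1,2) by simp
    then have "f i \<in> L!i \<and> f i \<notin> descs L i" using fi[of i] by blast
    ultimately have "f j \<in> L!j" "f i \<in> L!i" "f i \<notin> descs L i" by blast+
    note h = this
    show False
    proof (cases "L!j \<subseteq> L!i")
      case True
      have "f i \<notin> L!j" using nd[OF that(1,2) True h(3)] .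
      then show False using h(1) that(3) by simp
    next
      case False
      then have "L!i \<inter> L!j = {}" using ij by blast
      then show False using h(1,2) that(3) by (metis disjoint_iff)
    qed
  qed
  have inj: "inj_on f {..<length L}"
  proof (rule inj_onI)
    fix i j assume ij: "i \<in> {..<length L}" "j \<in> {..<length L}" "f i = f j"
    show "i = j"
    proof (rule ccontr)
      assume "i \<noteq> j"
      then consider "i < j" | "j < i" by linarith
      then show False
      proof cases
        case 1 then show False using lt[of i j] ij by simp
      next
        case 2 then show False using lt[of j i] ij by simp
      qed
    qed
  qed
  have "f ` {..<length L} \<subseteq> S"
  proof
    fix x assume "x \<in> f ` {..<length L}"
    then obtain i where i: "i < length L" "x = f i" by auto
    have "L!i \<subseteq> S" using assms(1) i(1) unfolding sinv_def by blast
    then show "x \<in> S" using fi[OF i(1)] i(2) by blast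
  qed
  from card_inj_on_le[OF inj this assms(2)] show ?thesis by simp
qed



lemma INFM_pigeon:
  fixes f :: "nat \<Rightarrow> 'b"
  assumes "\<exists>\<^sub>\<infinity>m. P m" "\<And>m. P m \<Longrightarrow> f m \<in> A" "finite A"
  shows "\<exists>v\<in>A. \<exists>\<^sub>\<infinity>m. P m \<and> f m = v"
proof -
  have inf: "infinite {m. P m}" using assms(1) by (simp add: INFM_iff_infinite)
  have "f ` {m. P m} \<subseteq> A" using assms(2) by blast
  then have "finite (f ` {m. P m})" using assms(3) by (rule finite_subset)
  from inf_img_fin_dom'[OF this inf] obtain v where v: "v \<in> f ` {m. P m}" "infinite (f -` {v} \<inter> {m. P m})" by blast
  have "f -` {v} \<inter> {m. P m} = {m. P m \<and> f m = v}" by auto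
  with v show ?thesis using assms(2) by (auto simp: INFM_iff_infinite)
qed

lemma MOST_ge:
  fixes f :: "nat \<Rightarrow> nat"
  assumes "\<forall>v<p. \<not>(\<exists>\<^sub>\<infinity>m. f m = v)"
  shows "\<exists>T. \<forall>m\<ge>T. p \<le> f m"
proof -
  have "\<forall>v\<in>{..<p}. \<forall>\<^sub>\<infinity>m. f m \<noteq> v" using assms by simp
  then have "\<forall>\<^sub>\<infinity>m. \<forall>v\<in>{..<p}. f m \<noteq> v" by (rule eventually_ball_finite[rotated]) simp
  then obtain T where "\<forall>m\<ge>T. \<forall>v\<in>{..<p}. f m \<noteq> v" by (auto simp: MOST_nat_le)
  then have "\<forall>m\<ge>T. p \<le> f m" using not_le by blast
  then show ?thesis by blast
qed

lemma noninc_const: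
  fixes f :: "nat \<Rightarrow> nat"
  assumes "\<forall>m\<ge>T. f (Suc m) \<le> f m"
  shows "\<exists>T'\<ge>T. \<forall>m\<ge>T'. f m = f T'"
  using assms
proof (induction "f T" arbitrary: T rule: less_induct)
  case less
  have mono: "f m' \<le> f m" if "T \<le> m" "m \<le> m'" for m m'
    using that(2)
  proof (induction m' rule: dec_induct)
    case base then show ?case by simp
  next
    case (step n)
    have "f (Suc n) \<le> f n" using less.prems that(1) step.hyps(1) by simp
    then show ?case using step.IH by linarith
  qed
  show ?case
  proof (cases "\<forall>m\<ge>T. f m = f T")
    case True then show ?thesis by blast
  next
    case False
    then obtain m where m: "m \<ge> T" "f m \<noteq> f T" by blast
    then have lt: "f m < f T" using mono[of T m] by simp
    have "\<forall>m'\<ge>m. f (Suc m') \<le> f m'" using less.prems m(1) by simp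
    from less.hyps[OF lt this] obtain T' where T': "T' \<ge> m" "\<forall>m'\<ge>T'. f m' = f T'" by blast
    have "T \<le> T'" using T'(1) m(1) by linarith
    with T'(2) show ?thesis by blast
  qed
qed

fun iter_seq :: "'a \<Rightarrow> (nat \<Rightarrow> 'a \<Rightarrow> 'a) \<Rightarrow> nat \<Rightarrow> 'a" where
  "iter_seq a f 0 = a"
| "iter_seq a f (Suc n) = f n (iter_seq a f n)"

locale stree =
  fixes S :: "nat \<Rightarrow> 'q set" and E :: "nat \<Rightarrow> 'q \<Rightarrow> 'q \<Rightarrow> bool" and F :: "'q set" and N :: nat
  assumes finS: "finite (S m)"
    and cardS: "card (S m) \<le> N"
    and E_dom: "E m x y \<Longrightarrow> x \<in> S m"
    and E_cod: "E m x y \<Longrightarrow> y \<in> S (Suc m)"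
    and par_ex: "y \<in> S (Suc m) \<Longrightarrow> \<exists>x. E m x y"
    and uniq: "E m x y \<Longrightarrow> E m x' y \<Longrightarrow> x = x'"
begin

definition D :: "nat \<Rightarrow> 'q set \<Rightarrow> 'q set" where "D m X = {y. \<exists>x\<in>X. E m x y}"

fun Lst :: "nat \<Rightarrow> 'q set list" where
  "Lst 0 = (if S 0 = {} then [] else [S 0])"
| "Lst (Suc m) = snext F (D m) (Lst m)"

definition pr :: "nat \<Rightarrow> nat" where "pr m = sprio F (D m) N (Lst m)"

abbreviation "k m \<equiv> length (Lst m)"
abbreviation "ex m \<equiv> ext F (D m) (Lst m)"
abbreviation "kp m \<equiv> keep F (D m) (Lst m)"
abbreviation "gr m \<equiv> green F (D m) (Lst m)"
definition pos :: "nat \<Rightarrow> nat \<Rightarrow> nat" where "pos m j = card {i. i < j \<and> kp m i}"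

lemma D_I: "x \<in> X \<Longrightarrow> E m x y \<Longrightarrow> y \<in> D m X"
  by (auto simp: D_def)

lemma dgoodD: "dgood (D m) (S m) (S (Suc m))"
proof -
  have 1: "\<forall>X Y. X \<subseteq> Y \<longrightarrow> D m X \<subseteq> D m Y" by (auto simp: D_def)
  have 2: "\<forall>X Y. X \<inter> Y = {} \<longrightarrow> D m X \<inter> D m Y = {}"
  proof (intro allI impI)
    fix X Y :: "'q set" assume XY: "X \<inter> Y = {}"
    show "D m X \<inter> D m Y = {}"
    proof (rule equals0I)
      fix y assume "y \<in> D m X \<inter> D m Y"
      then obtain x x' where "x \<in> X" "E m x y" "x' \<in> Y" "E m x' y" by (auto simp: D_def)
      then show False using uniq[of m x y x'] XY by auto
    qed
  qed
  have 3: "D m (S m) = S (Suc m)"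
  proof
    show "D m (S m) \<subseteq> S (Suc m)" using E_cod by (auto simp: D_def)
    show "S (Suc m) \<subseteq> D m (S m)"
    proof
      fix y assume "y \<in> S (Suc m)"
      then obtain x where "E m x y" using par_ex by blast
      then show "y \<in> D m (S m)" using E_dom by (auto simp: D_def)
    qed
  qed
  have 4: "\<forall>X. D m X \<subseteq> S (Suc m)" using E_cod by (auto simp: D_def)
  show ?thesis unfolding dgood_def using 1 2 3 4 by (intro conjI) simp_all
qed

lemma inv: "sinv (S m) (Lst m)"
proof (induction m)
  case 0
  show ?case
  proof (cases "S 0 = {}")
    case True then show ?thesis by (simp add: sinv_def lam_def descs_def)
  next
    case False
    have "descs [S 0] 0 = {}" by (simp add: descs_def)
    then show ?thesis using False by (simp add: sinv_def lam_def)
  qed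
next
  case (Suc m)
  then show ?case using sinv_step[OF Suc dgoodD] by simp
qed

lemma k_le: "k m \<le> N"
  using sinv_len[OF inv finS] cardS le_trans by blast

lemma lam_Lst: "lam (Lst m)" using inv by (simp add: sinv_def)
lemma lam_ex: "lam (ex m)" by (rule lam_ext[OF lam_Lst dgoodD])

lemma Lst_ne: "i < k m \<Longrightarrow> Lst m ! i \<noteq> {}" using inv by (simp add: sinv_def)
lemma Lst_sub: "i < k m \<Longrightarrow> Lst m ! i \<subseteq> S m" using inv by (simp add: sinv_def)
lemma Lst_root: "S m \<noteq> {} \<Longrightarrow> 0 < k m \<and> Lst m ! 0 = S m"
  using inv[of m] unfolding sinv_def by auto

lemma ex_old: "i < k m \<Longrightarrow> ex m ! i = D m (Lst m ! i)"
  by (rule ext_old)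
lemma ex_new: "i < k m \<Longrightarrow> ex m ! (k m + i) = D m (newn F (Lst m) i)"
  by (rule ext_new)

lemma pos_kept: "kp m j \<Longrightarrow> j < 2 * k m \<Longrightarrow> pos m j < k (Suc m) \<and> Lst (Suc m) ! pos m j = ex m ! j"
  using snext_pos[of F "D m" "Lst m" j] by (simp add: pos_def)

lemma pos_all: "(\<forall>i<j. kp m i) \<Longrightarrow> pos m j = j"
proof -
  assume "\<forall>i<j. kp m i"
  then have "{i. i < j \<and> kp m i} = {..<j}" by auto
  then show ?thesis by (simp add: pos_def)
qed

lemma pos_le: "pos m j \<le> j"
proof -
  have "{i. i < j \<and> kp m i} \<subseteq> {..<j}" by auto
  then have "card {i. i < j \<and> kp m i} \<le> card {..<j}" by (rule card_mono[rotated]) simp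
  then show ?thesis by (simp add: pos_def)
qed

lemma pos_gt: "(\<forall>i\<le>j. kp m i) \<Longrightarrow> j < l \<Longrightarrow> j < pos m l"
proof -
  assume a: "\<forall>i\<le>j. kp m i" "j < l"
  have "{..j} \<subseteq> {i. i < l \<and> kp m i}" using a by auto
  then have "card {..j} \<le> card {i. i < l \<and> kp m i}" by (rule card_mono[rotated]) simp
  then show ?thesis by (simp add: pos_def)
qed

lemma pos_eq_all: "pos m j = j \<Longrightarrow> i < j \<Longrightarrow> kp m i"
proof (rule ccontr)
  assume a: "pos m j = j" "i < j" "\<not> kp m i"
  have "{i. i < j \<and> kp m i} \<subseteq> {..<j} - {i}" using a by auto
  then have "card {i. i < j \<and> kp m i} \<le> card ({..<j} - {i})" by (rule card_mono[rotated]) simp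
  also have "\<dots> = j - 1" using a(2) by simp
  finally show False using a(1,2) by (simp add: pos_def)
qed

lemma snext_Lst: "p < k (Suc m) \<Longrightarrow> Lst (Suc m) ! p = ex m ! (filter (kp m) [0..<2 * k m] ! p)"
  using snext_nth[of p F "D m" "Lst m"] by simp

lemma snext_idx_Lst: "p < k (Suc m) \<Longrightarrow> kp m (filter (kp m) [0..<2 * k m] ! p) \<and> filter (kp m) [0..<2 * k m] ! p < 2 * k m"
  using snext_idx[of p F "D m" "Lst m"] by simp

lemma k_Suc: "k (Suc m) = length (filter (kp m) [0..<2 * k m])"
  using snext_len[of F "D m" "Lst m"] by simp

definition prset :: "nat \<Rightarrow> nat set" where
  "prset m = {2*i+1 | i. i < k m \<and> \<not> kp m i} \<union> {2*i+2 | i. gr m i} \<union> {2*N+1}"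

lemma pr_prset: "pr m = Min (prset m)" by (simp add: pr_def sprio_def prset_def)

lemma prset_fin: "finite (prset m)"
proof -
  have a: "{2*i+1 | i. i < k m \<and> \<not> kp m i} \<subseteq> (\<lambda>i. 2*i+1) ` {..<k m}" by auto
  have b: "{2*i+2 | i. gr m i} \<subseteq> (\<lambda>i. 2*i+2) ` {..<k m}" by (auto simp: green_def)
  have "finite {2*i+1 | i. i < k m \<and> \<not> kp m i}" by (rule finite_subset[OF a]) simp
  moreover have "finite {2*i+2 | i. gr m i}" by (rule finite_subset[OF b]) simp
  ultimately show ?thesis unfolding prset_def by simp
qed

lemma pr_in: "pr m \<in> prset m"
  unfolding pr_prset by (rule Min_in[OF prset_fin]) (simp add: prset_def)

lemma pr_le: "x \<in> prset m \<Longrightarrow> pr m \<le> x"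
  unfolding pr_prset by (rule Min_le[OF prset_fin])

lemma pr_bound: "pr m \<le> 2*N+1"
  by (rule pr_le) (simp add: prset_def)

lemma pr_pos: "1 \<le> pr m"
  using pr_in[of m] unfolding prset_def by auto

lemma pr_green: "gr m i \<Longrightarrow> pr m \<le> 2*i+2"
  by (rule pr_le) (auto simp: prset_def)

lemma pr_rem: "i < k m \<Longrightarrow> \<not> kp m i \<Longrightarrow> pr m \<le> 2*i+1"
  by (rule pr_le) (auto simp: prset_def)

lemma pr_odd: "odd (pr m) \<Longrightarrow> pr m = 2*N+1 \<or> (\<exists>i. i < k m \<and> \<not> kp m i \<and> pr m = 2*i+1)"
  using pr_in[of m] unfolding prset_def by auto

lemma pr_even: "even (pr m) \<Longrightarrow> \<exists>i. gr m i \<and> pr m = 2*i+2"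
  using pr_in[of m] unfolding prset_def by auto

definition Infs :: "nat set" where "Infs = {p. \<exists>\<^sub>\<infinity>m. pr m = p}"

lemma Infs_sub: "Infs \<subseteq> {..2*N+1}"
proof
  fix p assume "p \<in> Infs"
  then have "\<exists>\<^sub>\<infinity>m. pr m = p" by (simp add: Infs_def)
  then obtain m where "pr m = p" by (auto simp: INFM_nat)
  then show "p \<in> {..2*N+1}" using pr_bound[of m] by simp
qed

lemma Infs_fin: "finite Infs" using Infs_sub finite_subset by blast

lemma INFM_pr: "\<exists>\<^sub>\<infinity>m. P m \<Longrightarrow> \<exists>v. \<exists>\<^sub>\<infinity>m. P m \<and> pr m = v"
  using INFM_pigeon[of P pr "{..2*N+1}"] pr_bound by auto

lemma Infs_ne: "Infs \<noteq> {}"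
  using INFM_pr[of "\<lambda>_. True"] by (auto simp: Infs_def)

lemma Min_Infs: "Min Infs \<in> Infs" "p \<in> Infs \<Longrightarrow> Min Infs \<le> p"
  using Min_in[OF Infs_fin Infs_ne] Min_le[OF Infs_fin] by auto

end

context stree begin

lemma MOST_geT: "\<forall>\<^sub>\<infinity>m. T \<le> (m::nat)" by (auto simp: MOST_nat_le)

context
  fixes x :: "nat \<Rightarrow> 'q"
  assumes path: "\<forall>m. E m (x m) (x (Suc m))"
begin

lemma xS: "x m \<in> S m" using E_dom path by blast

definition stable :: "nat \<Rightarrow> nat \<Rightarrow> bool" where
  "stable m j \<longleftrightarrow> j < k m \<and> x m \<in> Lst m ! j \<and> (\<forall>i\<le>j. kp m i)"

lemma x_ex: "i < k m \<Longrightarrow> x m \<in> Lst m ! i \<Longrightarrow> x (Suc m) \<in> ex m ! i"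
  using ex_old[of i m] D_I[of "x m" "Lst m ! i" m "x (Suc m)"] path by simp

lemma root_stable: "stable m 0"
proof -
  have "S m \<noteq> {}" using xS by blast
  then have r: "0 < k m" "Lst m ! 0 = S m" using Lst_root by auto
  have "x (Suc m) \<in> ex m ! 0" using x_ex[OF r(1)] r(2) xS by simp
  then have "kp m 0" unfolding keep_def by blast
  then show ?thesis using r xS by (simp add: stable_def)
qed

lemma stable_A:
  assumes st: "\<forall>m\<ge>T. stable m j" and g: "\<exists>\<^sub>\<infinity>m. gr m j"
  shows "even (Min Infs)"
proof -
  have odd_big: "2*j+3 \<le> pr m" if "m \<ge> T" "odd (pr m)" for m
  proof -
    have s: "stable m j" using st that(1) by simp
    then have "j < k m" by (simp add: stable_def)
    then have jN: "j < N" using k_le[of m] by simp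
    from pr_odd[OF that(2)] show ?thesis
    proof
      assume "pr m = 2*N+1" then show ?thesis using jN by simp
    next
      assume "\<exists>i. i < k m \<and> \<not> kp m i \<and> pr m = 2*i+1"
      then obtain i where i: "i < k m" "\<not> kp m i" "pr m = 2*i+1" by blast
      have "\<not> i \<le> j" using s i(2) by (auto simp: stable_def)
      then show ?thesis using i(3) by simp
    qed
  qed
  have "\<exists>\<^sub>\<infinity>m. gr m j \<and> T \<le> m" by (rule INFM_conjI[OF g MOST_geT])
  from INFM_pr[OF this] obtain v where v: "\<exists>\<^sub>\<infinity>m. (gr m j \<and> T \<le> m) \<and> pr m = v" by blast
  then obtain m0 where m0: "gr m0 j" "pr m0 = v" using INFM_EX by blast
  have vle: "v \<le> 2*j+2" using pr_green[OF m0(1)] m0(2) by simp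
  have "\<exists>\<^sub>\<infinity>m. pr m = v" using v by (rule INFM_mono) simp
  then have "v \<in> Infs" by (simp add: Infs_def)
  then have mle: "Min Infs \<le> 2*j+2" using Min_Infs(2) vle by fastforce
  have "\<exists>\<^sub>\<infinity>m. pr m = Min Infs" using Min_Infs(1) by (simp add: Infs_def)
  then have "\<exists>\<^sub>\<infinity>m. pr m = Min Infs \<and> T \<le> m" by (rule INFM_conjI[OF _ MOST_geT])
  then obtain m where m: "pr m = Min Infs" "T \<le> m" using INFM_EX by blast
  show ?thesis
  proof (rule ccontr)
    assume "odd (Min Infs)"
    then have "2*j+3 \<le> pr m" using odd_big[OF m(2)] m(1) by simp
    then show False using m(1) mle by simp
  qed
qed

lemma stable_B:
  assumes st: "\<forall>m\<ge>T. stable m j" and ng: "\<not>(\<exists>\<^sub>\<infinity>m. gr m j)" and infF: "\<exists>\<^sub>\<infinity>m. x m \<in> F"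
  shows "\<exists>T' j'. j < j' \<and> (\<forall>m\<ge>T'. stable m j')"
proof -
  have "\<forall>\<^sub>\<infinity>m. \<not> gr m j" using ng by simp
  then obtain T0 where T0: "\<forall>m\<ge>T0. \<not> gr m j" by (auto simp: MOST_nat_le)
  define T1 where "T1 = max T T0"
  have T1: "T1 \<ge> T" "\<forall>m\<ge>T1. \<not> gr m j" using T0 by (auto simp: T1_def)
  define deep where "deep m \<longleftrightarrow> (\<exists>i. j < i \<and> i < k m \<and> x m \<in> Lst m ! i)" for m
  have stp: "\<exists>l. j < l \<and> l < 2 * k m \<and> kp m l \<and> j < pos m l \<and> pos m l \<le> l \<and> pos m l < k (Suc m) \<and>
      x (Suc m) \<in> Lst (Suc m) ! pos m l \<and> (\<forall>i. j < i \<and> i < k m \<and> x m \<in> Lst m ! i \<longrightarrow> l \<le> i)"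
    if m: "m \<ge> T1" and dF: "deep m \<or> x m \<in> F" for m
  proof -
    have s: "stable m j" using st m T1 by simp
    have jk: "j < k m" and xj: "x m \<in> Lst m ! j" and allk: "\<forall>i\<le>j. kp m i" using s by (auto simp: stable_def)
    define A where "A = {l. j < l \<and> l < 2 * k m \<and> x (Suc m) \<in> ex m ! l}"
    have Ai: "i \<in> A" if "j < i" "i < k m" "x m \<in> Lst m ! i" for i
      using that x_ex[of i m] by (auto simp: A_def)
    have Ane: "A \<noteq> {}"
    proof (cases "deep m")
      case True then obtain i where "j < i" "i < k m" "x m \<in> Lst m ! i" by (auto simp: deep_def)
      then show ?thesis using Ai by blast
    next
      case False
      then have xF: "x m \<in> F" using dF by simp
      have "x m \<notin> descs (Lst m) j"
      proof
        assume "x m \<in> descs (Lst m) j"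
        then obtain i where "j < i" "i < k m" "x m \<in> Lst m ! i" by (auto simp: descs_def)
        then show False using False by (auto simp: deep_def)
      qed
      then have "x m \<in> newn F (Lst m) j" using xj xF by (simp add: newn_def)
      then have "x (Suc m) \<in> D m (newn F (Lst m) j)" using path by (intro D_I) auto
      then have "x (Suc m) \<in> ex m ! (k m + j)" using ex_new[OF jk] by simp
      moreover have "j < k m + j" "k m + j < 2 * k m" using jk by linarith+
      ultimately have "k m + j \<in> A" by (simp add: A_def)
      then show ?thesis by blast
    qed
    define l where "l = Min A"
    have finA: "finite A" unfolding A_def by (rule finite_subset[of _ "{..<2 * k m}"]) auto
    have lA: "l \<in> A" using Min_in[OF finA Ane] l_def by simp
    have lmin: "l \<le> i" if "i \<in> A" for i using Min_le[OF finA that] l_def by simp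
    have l2: "j < l" "l < 2 * k m" using lA by (auto simp: A_def)
    have xl: "x (Suc m) \<in> ex m ! l" using lA by (simp add: A_def)
    have kl: "kp m l"
    proof -
      have ne: "ex m ! l \<noteq> {}" using xl by blast
      have "\<not> (\<exists>i<l. gr m i \<and> ex m ! l \<subseteq> ex m ! i)"
      proof
        assume "\<exists>i<l. gr m i \<and> ex m ! l \<subseteq> ex m ! i"
        then obtain i where i: "i < l" "gr m i" "ex m ! l \<subseteq> ex m ! i" by blast
        have ik: "i < k m" using i(2) by (simp add: green_def)
        have xi: "x (Suc m) \<in> ex m ! i" using i(3) xl by blast
        consider "j < i" | "i = j" | "i < j" by linarith
        then show False
        proof cases
          case 1 then have "i \<in> A" using ik xi by (simp add: A_def)
          then have "l \<le> i" by (rule lmin)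
          then show False using i(1) by simp
        next
          case 2 then show False using i(2) T1 m by simp
        next
          case 3
          have xjj: "x (Suc m) \<in> ex m ! j" using x_ex[OF jk xj] .
          have jk2: "j < length (ex m)" using jk by simp
          have "ex m ! j \<subseteq> ex m ! i \<or> ex m ! i \<inter> ex m ! j = {}" using lam_ex[of m, unfolded lam_def, rule_format, OF 3 jk2] .
          then have "ex m ! j \<subseteq> ex m ! i" using xi xjj by blast
          then have "\<exists>i'<j. gr m i' \<and> ex m ! j \<subseteq> ex m ! i'" using 3 i(2) by blast
          then have "\<not> kp m j" by (simp add: keep_def)
          then show False using allk by simp
        qed
      qed
      then show ?thesis using ne by (simp add: keep_def)
    qed
    have pk: "pos m l < k (Suc m) \<and> Lst (Suc m) ! pos m l = ex m ! l" by (rule pos_kept[OF kl l2(2)])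
    have pg: "j < pos m l" by (rule pos_gt[OF allk l2(1)])
    have pl: "pos m l \<le> l" by (rule pos_le)
    have "\<forall>i. j < i \<and> i < k m \<and> x m \<in> Lst m ! i \<longrightarrow> l \<le> i" using Ai lmin by blast
    then show ?thesis using l2 kl pg pl pk xl by (intro exI[of _ l]) simp
  qed
  obtain s where s: "s \<ge> T1" "x s \<in> F" using infF unfolding INFM_nat_le by blast
  have deep_all: "deep m" if "Suc s \<le> m" for m
    using that
  proof (induction m rule: dec_induct)
    case base
    from stp[OF s(1)] s(2) obtain l where "j < pos s l" "pos s l < k (Suc s)" "x (Suc s) \<in> Lst (Suc s) ! pos s l" by blast
    then show ?case unfolding deep_def by blast
  next
    case (step n)
    have "n \<ge> T1" using step.hyps s(1) by linarith
    from stp[OF this] step.IH obtain l where "j < pos n l" "pos n l < k (Suc n)" "x (Suc n) \<in> Lst (Suc n) ! pos n l" by blast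
    then show ?case unfolding deep_def by blast
  qed
  define dp where "dp m = (LEAST i. j < i \<and> i < k m \<and> x m \<in> Lst m ! i)" for m
  have dp_prop: "j < dp m \<and> dp m < k m \<and> x m \<in> Lst m ! dp m" if "deep m" for m
    using that unfolding deep_def dp_def by (rule LeastI_ex)
  have dp_le: "dp m \<le> i" if "j < i" "i < k m" "x m \<in> Lst m ! i" for m i
    unfolding dp_def using that by (intro Least_le) simp
  have dp_step: "dp (Suc m) \<le> pos m l \<and> pos m l \<le> l \<and> l \<le> dp m \<and> kp m l"
    if "m \<ge> Suc s" "j < l \<and> l < 2 * k m \<and> kp m l \<and> j < pos m l \<and> pos m l \<le> l \<and> pos m l < k (Suc m) \<and>
      x (Suc m) \<in> Lst (Suc m) ! pos m l \<and> (\<forall>i. j < i \<and> i < k m \<and> x m \<in> Lst m ! i \<longrightarrow> l \<le> i)" for m l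
  proof -
    have "deep m" using deep_all that(1) by simp
    then have "l \<le> dp m" using dp_prop that(2) by blast
    moreover have "dp (Suc m) \<le> pos m l" using dp_le that(2) by blast
    ultimately show ?thesis using that(2) by simp
  qed
  have dec: "\<forall>m\<ge>Suc s. dp (Suc m) \<le> dp m"
  proof (intro allI impI)
    fix m assume m: "Suc s \<le> m"
    then have "m \<ge> T1" using s(1) by simp
    from stp[OF this] deep_all[OF m] obtain l where
      "j < l \<and> l < 2 * k m \<and> kp m l \<and> j < pos m l \<and> pos m l \<le> l \<and> pos m l < k (Suc m) \<and>
      x (Suc m) \<in> Lst (Suc m) ! pos m l \<and> (\<forall>i. j < i \<and> i < k m \<and> x m \<in> Lst m ! i \<longrightarrow> l \<le> i)" by blast
    from dp_step[OF m this] show "dp (Suc m) \<le> dp m" by simp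
  qed
  from noninc_const[OF dec] obtain T2 where T2: "T2 \<ge> Suc s" "\<forall>m\<ge>T2. dp m = dp T2" by blast
  define j' where "j' = dp T2"
  have jj: "j < j'" using dp_prop[OF deep_all[OF T2(1)]] by (simp add: j'_def)
  have "stable m j'" if m: "m \<ge> T2" for m
  proof -
    have ms: "m \<ge> Suc s" using m T2(1) by simp
    then have mT1: "m \<ge> T1" using s(1) by simp
    have sm: "Suc m \<ge> T2" using m by simp
    have "dp m = dp T2" using T2(2) m by blast
    moreover have "dp (Suc m) = dp T2" using T2(2) sm by blast
    ultimately
    have dpm: "dp m = j'" "dp (Suc m) = j'" unfolding j'_def by simp_all
    have pr1: "j' < k m" "x m \<in> Lst m ! j'" using dp_prop[OF deep_all[OF ms]] dpm by simp_all
    from stp[OF mT1] deep_all[OF ms] obtain l where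
      hl: "j < l \<and> l < 2 * k m \<and> kp m l \<and> j < pos m l \<and> pos m l \<le> l \<and> pos m l < k (Suc m) \<and>
      x (Suc m) \<in> Lst (Suc m) ! pos m l \<and> (\<forall>i. j < i \<and> i < k m \<and> x m \<in> Lst m ! i \<longrightarrow> l \<le> i)" by blast
    from dp_step[OF ms hl] dpm have eq: "pos m l = l" "l = j'" "kp m l" by simp_all
    have "\<forall>i<l. kp m i" using pos_eq_all[OF eq(1)] by blast
    then have "\<forall>i\<le>j'. kp m i" using eq by (metis le_neq_implies_less)
    then show ?thesis using pr1 by (simp add: stable_def)
  qed
  then show ?thesis using jj by blast
qed

lemma complete:
  assumes infF: "\<exists>\<^sub>\<infinity>m. x m \<in> F"
  shows "even (Min Infs)"
proof -
  have C: "(\<exists>T. \<forall>m\<ge>T. stable m j) \<Longrightarrow> even (Min Infs)" for j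
  proof (induction "N - j" arbitrary: j rule: less_induct)
    case less
    from less.prems obtain T where T: "\<forall>m\<ge>T. stable m j" by blast
    show ?case
    proof (cases "\<exists>\<^sub>\<infinity>m. gr m j")
      case True then show ?thesis by (rule stable_A[OF T])
    next
      case False
      from stable_B[OF T False infF] obtain T' j' where j': "j < j'" "\<forall>m\<ge>T'. stable m j'" by blast
      have "j' < k T'" using j'(2) by (simp add: stable_def)
      then have "j' < N" using k_le[of T'] by simp
      then have "N - j' < N - j" using j'(1) by simp
      then show ?thesis using less.hyps j'(2) by blast
    qed
  qed
  show ?thesis by (rule C[of 0]) (use root_stable in blast)
qed

end

end

context stree begin

definition par :: "nat \<Rightarrow> 'q \<Rightarrow> 'q" where "par m y = (THE x. E m x y)"

lemma par_eq: "E m x y \<Longrightarrow> par m y = x"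
  unfolding par_def by (rule the_equality) (auto intro: uniq)

lemma par_E: "y \<in> S (Suc m) \<Longrightarrow> E m (par m y) y"
  using par_ex[of y m] par_eq by metis

fun anc :: "nat \<Rightarrow> nat \<Rightarrow> 'q \<Rightarrow> 'q" where
  "anc s 0 y = y"
| "anc s (Suc e) y = anc s e (par (s+e) y)"

lemma anc_S: "y \<in> S (s+e) \<Longrightarrow> anc s e y \<in> S s"
proof (induction e arbitrary: y)
  case 0 then show ?case by simp
next
  case (Suc e)
  have "y \<in> S (Suc (s+e))" using Suc.prems by simp
  then have "par (s+e) y \<in> S (s+e)" using par_E E_dom by blast
  then show ?case using Suc.IH by simp
qed

lemma anc_path: "\<forall>i. E i (x i) (x (Suc i)) \<Longrightarrow> anc s e (x (s+e)) = x s"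
proof (induction e)
  case 0 then show ?case by simp
next
  case (Suc e)
  have "par (s+e) (x (s + Suc e)) = x (s+e)" using Suc.prems par_eq by simp
  then show ?case using Suc by simp
qed

lemma anc_split: "anc s (d+e) y = anc s d (anc (s+d) e y)"
proof (induction e arbitrary: y)
  case 0 then show ?case by simp
next
  case (Suc e)
  have "anc s (d + Suc e) y = anc s (d+e) (par (s+(d+e)) y)" by simp
  also have "\<dots> = anc s d (anc (s+d) e (par (s+(d+e)) y))" by (rule Suc.IH)
  also have "\<dots> = anc s d (anc (s+d) (Suc e) y)" by (simp add: add.assoc)
  finally show ?case .
qed

lemma anc_one: "anc s (Suc 0) y = par s y" by simp

lemma koenig:
  assumes X: "\<forall>m\<ge>t0. X m \<noteq> {} \<and> X m \<subseteq> S m \<and> X (Suc m) = D m (X m)"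
  shows "\<exists>x. \<forall>m\<ge>t0. x m \<in> X m \<and> E m (x m) (x (Suc m))"
proof -
  have finX: "finite (X m)" if "m \<ge> t0" for m using X that finS finite_subset by blast
  have anc_X: "anc m e y \<in> X m" if "m \<ge> t0" "y \<in> X (m+e)" for m e y
    using that(2)
  proof (induction e arbitrary: y)
    case 0 then show ?case by simp
  next
    case (Suc e)
    have "X (Suc (m+e)) = D (m+e) (X (m+e))" using X that(1) by simp
    moreover have "y \<in> X (Suc (m+e))" using Suc.prems by simp
    ultimately have "y \<in> D (m+e) (X (m+e))" by simp
    then obtain z where z: "z \<in> X (m+e)" "E (m+e) z y" by (auto simp: D_def)
    have "par (m+e) y = z" by (rule par_eq[OF z(2)])
    then show ?case using Suc.IH[OF z(1)] by simp
  qed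
  define good where "good m z \<longleftrightarrow> z \<in> X m \<and> (\<forall>e. \<exists>y\<in>X (m+e). anc m e y = z)" for m z
  have down: "\<exists>y'\<in>X (m+e). anc m e y' = z"
    if "m \<ge> t0" "y \<in> X (m+e')" "anc m e' y = z" "e \<le> e'" for m e e' y z
  proof -
    define y' where "y' = anc (m+e) (e'-e) y"
    have "y \<in> X ((m+e) + (e'-e))" using that(2,4) by simp
    then have "y' \<in> X (m+e)" unfolding y'_def by (rule anc_X[rotated]) (use that(1) in simp)
    moreover have "anc m e y' = z" unfolding y'_def using anc_split[of m e "e'-e" y] that(3,4) by simp
    ultimately show ?thesis by blast
  qed
  have ex_good: "\<exists>z. good m z" if m: "m \<ge> t0" for m
  proof (rule ccontr)
    assume "\<not> (\<exists>z. good m z)"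
    then have "\<forall>z\<in>X m. \<exists>e. \<not>(\<exists>y\<in>X (m+e). anc m e y = z)" unfolding good_def by blast
    from bchoice[OF this] obtain ez where ez: "\<forall>z\<in>X m. \<not>(\<exists>y\<in>X (m + ez z). anc m (ez z) y = z)" by blast
    define E0 where "E0 = Max (ez ` X m)"
    have "m + E0 \<ge> t0" using m by simp
    then have "X (m+E0) \<noteq> {}" using X by blast
    then obtain y where y: "y \<in> X (m+E0)" by blast
    define z where "z = anc m E0 y"
    have zX: "z \<in> X m" unfolding z_def by (rule anc_X[OF m y])
    have "ez z \<le> E0" unfolding E0_def using zX finX[OF m] by simp
    from down[OF m y z_def[symmetric] this] ez zX show False by blast
  qed
  have good_child: "\<exists>c. good (Suc m) c \<and> E m z c" if m: "m \<ge> t0" and gz: "good m z" for m z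
  proof -
    define Ch where "Ch = {c \<in> X (Suc m). par m c = z}"
    have finCh: "finite Ch" unfolding Ch_def using finX[of "Suc m"] m by simp
    have "\<exists>c\<in>Ch. good (Suc m) c"
    proof (rule ccontr)
      assume "\<not> (\<exists>c\<in>Ch. good (Suc m) c)"
      then have "\<forall>c\<in>Ch. \<exists>e. \<not>(\<exists>y\<in>X (Suc m+e). anc (Suc m) e y = c)" unfolding good_def Ch_def by blast
      from bchoice[OF this] obtain ec where ec: "\<forall>c\<in>Ch. \<not>(\<exists>y\<in>X (Suc m + ec c). anc (Suc m) (ec c) y = c)" by blast
      define E0 where "E0 = Max (insert 0 (ec ` Ch))"
      from gz obtain y where y: "y \<in> X (m + Suc E0)" "anc m (Suc E0) y = z" unfolding good_def by blast
      have y2: "y \<in> X (Suc m + E0)" using y(1) by simp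
      define c where "c = anc (Suc m) E0 y"
      have cX: "c \<in> X (Suc m)" unfolding c_def by (rule anc_X[OF _ y2]) (use m in simp)
      have "anc m (Suc 0 + E0) y = anc m (Suc 0) (anc (m + Suc 0) E0 y)" by (rule anc_split)
      then have "par m c = z" using y(2) by (simp add: c_def)
      then have cCh: "c \<in> Ch" using cX by (simp add: Ch_def)
      have "ec c \<le> E0" unfolding E0_def using cCh finCh by simp
      from down[OF _ y2 c_def[symmetric] this] m ec cCh show False by simp
    qed
    then obtain c where c: "c \<in> Ch" "good (Suc m) c" by blast
    have "Suc m \<ge> t0" using m by simp
    then have "X (Suc m) \<subseteq> S (Suc m)" using X by blast
    then have "c \<in> S (Suc m)" using c(1) unfolding Ch_def by blast
    then have "E m (par m c) c" by (rule par_E)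
    then show ?thesis using c by (auto simp: Ch_def)
  qed
  define z0 where "z0 = (SOME z. good t0 z)"
  define f where "f = (\<lambda>i c. SOME c'. good (Suc (t0+i)) c' \<and> E (t0+i) c c')"
  define xs where "xs = iter_seq z0 f"
  have xs_good: "good (t0+i) (xs i)" for i
  proof (induction i)
    case 0
    have "good t0 z0" unfolding z0_def using ex_good[of t0] by (auto intro: someI_ex)
    then show ?case by (simp add: xs_def)
  next
    case (Suc i)
    have "\<exists>c. good (Suc (t0+i)) c \<and> E (t0+i) (xs i) c" using good_child[OF _ Suc.IH] by simp
    then have "good (Suc (t0+i)) (f i (xs i)) \<and> E (t0+i) (xs i) (f i (xs i))"
      unfolding f_def by (rule someI_ex)
    then show ?case by (simp add: xs_def)
  qed
  have xs_E: "E (t0+i) (xs i) (xs (Suc i))" for i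
  proof -
    have "\<exists>c. good (Suc (t0+i)) c \<and> E (t0+i) (xs i) c" using good_child[OF _ xs_good[of i]] by simp
    then have "good (Suc (t0+i)) (f i (xs i)) \<and> E (t0+i) (xs i) (f i (xs i))"
      unfolding f_def by (rule someI_ex)
    then show ?thesis by (simp add: xs_def)
  qed
  define x where "x m = xs (m - t0)" for m
  have "\<forall>m\<ge>t0. x m \<in> X m \<and> E m (x m) (x (Suc m))"
  proof (intro allI impI)
    fix m assume m: "t0 \<le> m"
    have "good (t0 + (m - t0)) (xs (m - t0))" by (rule xs_good)
    then have a: "x m \<in> X m" using m by (simp add: good_def x_def)
    have "E (t0 + (m-t0)) (xs (m-t0)) (xs (Suc (m-t0)))" by (rule xs_E)
    moreover have "Suc m - t0 = Suc (m - t0)" using m by simp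
    ultimately have "E m (x m) (x (Suc m))" using m by (simp add: x_def)
    then show "x m \<in> X m \<and> E m (x m) (x (Suc m))" using a by simp
  qed
  then show ?thesis by blast
qed

end

context stree begin

lemma sound:
  assumes ev: "even (Min Infs)"
  shows "\<exists>x. (\<forall>m. E m (x m) (x (Suc m))) \<and> (\<exists>\<^sub>\<infinity>m. x m \<in> F)"
proof -
  define p where "p = Min Infs"
  have low: "\<forall>v<p. \<not>(\<exists>\<^sub>\<infinity>m. pr m = v)"
  proof (intro allI impI notI)
    fix v assume "v < p" "\<exists>\<^sub>\<infinity>m. pr m = v"
    then have "v \<in> Infs" by (simp add: Infs_def)
    then show False using Min_Infs(2) \<open>v < p\<close> p_def by fastforce
  qed
  from MOST_ge[OF low] obtain T where T: "\<forall>m\<ge>T. p \<le> pr m" by blast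
  have pinf: "\<exists>\<^sub>\<infinity>m. pr m = p" using Min_Infs(1) p_def by (simp add: Infs_def)
  then obtain m0 where m0: "pr m0 = p" using INFM_EX by blast
  have "even (pr m0)" using m0 ev p_def by simp
  from pr_even[OF this] obtain r where r: "gr m0 r" "pr m0 = 2*r+2" by blast
  have pr_: "p = 2*r+2" using r m0 by simp
  have grinf: "\<exists>\<^sub>\<infinity>m. gr m r"
  proof (rule INFM_mono[OF pinf])
    fix m assume a: "pr m = p"
    then have "even (pr m)" using pr_ by simp
    from pr_even[OF this] obtain i where "gr m i" "pr m = 2*i+2" by blast
    then show "gr m r" using a pr_ by simp
  qed
  have keepT: "kp m i" if "m \<ge> T" "i \<le> r" "i < k m" for m i
  proof (rule ccontr)
    assume "\<not> kp m i"
    then have "pr m \<le> 2*i+1" using pr_rem that(3) by blast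
    moreover have "p \<le> pr m" using T that(1) by blast
    ultimately show False using pr_ that(2) by simp
  qed
  have "\<exists>\<^sub>\<infinity>m. gr m r \<and> T \<le> m" by (rule INFM_conjI[OF grinf MOST_geT])
  then obtain t0 where t0: "gr t0 r" "T \<le> t0" using INFM_EX by blast
  have rk: "r < k m" if "t0 \<le> m" for m
    using that
  proof (induction m rule: dec_induct)
    case base then show ?case using t0(1) by (simp add: green_def)
  next
    case (step n)
    have nT: "n \<ge> T" using step.hyps t0(2) by simp
    have allk: "\<forall>i<r. kp n i" using keepT[OF nT] step.IH by simp
    have kr: "kp n r" using keepT[OF nT _ step.IH] by simp
    have "pos n r = r" by (rule pos_all[OF allk])
    then show ?case using pos_kept[OF kr] step.IH by simp
  qed
  have allkept: "\<forall>i\<le>r. kp m i" if "t0 \<le> m" for m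
    using keepT[of m] rk[OF that] that t0(2) by simp
  have posr: "pos m r = r" if "t0 \<le> m" for m
    using allkept[OF that] by (intro pos_all) simp
  have Xstep: "Lst (Suc m) ! r = ex m ! r" if "t0 \<le> m" for m
  proof -
    have "kp m r" using allkept[OF that] by simp
    from pos_kept[OF this] rk[OF that] posr[OF that] show ?thesis by simp
  qed
  define X where "X m = Lst m ! r" for m
  have Xp: "X m \<noteq> {} \<and> X m \<subseteq> S m \<and> X (Suc m) = D m (X m)" if "t0 \<le> m" for m
    using Lst_ne[OF rk[OF that]] Lst_sub[OF rk[OF that]] Xstep[OF that] ex_old[OF rk[OF that]]
    unfolding X_def by simp
  have dchar: "\<exists>l. r < l \<and> l < 2 * k m \<and> kp m l \<and> Lst (Suc m) ! j = ex m ! l \<and> ex m ! l \<subseteq> ex m ! r"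
    if m: "t0 \<le> m" and j: "r < j" "j < k (Suc m)" "Lst (Suc m) ! j \<subseteq> X (Suc m)" for m j
  proof -
    define ks where "ks = filter (kp m) [0..<2 * k m]"
    define l where "l = ks ! j"
    have Lj: "Lst (Suc m) ! j = ex m ! l" unfolding l_def ks_def by (rule snext_Lst[OF j(2)])
    have kl: "kp m l" "l < 2 * k m" using snext_idx_Lst[OF j(2)] unfolding l_def ks_def by simp_all
    have kr: "kp m r" using allkept[OF m] by simp
    have r2: "r < 2 * k m" using rk[OF m] by simp
    have "ks ! pos m r = r" unfolding ks_def pos_def using filter_upt_pos[of "kp m" r "2 * k m", OF kr r2] by simp
    then have ksr: "ks ! r = r" using posr[OF m] by simp
    have lenks: "j < length ks" using j(2) k_Suc[of m] unfolding ks_def by simp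
    have "ks ! r < ks ! j" using filter_upt_sorted[of "kp m" "2 * k m"] j(1) lenks unfolding ks_def
      by (simp add: sorted_wrt_iff_nth_less)
    then have rl: "r < l" using ksr l_def by simp
    have "ex m ! r = X (Suc m)" using Xstep[OF m] by (simp add: X_def)
    then have "ex m ! l \<subseteq> ex m ! r" using j(3) Lj by simp
    then show ?thesis using rl kl Lj by blast
  qed
  have olddesc: "Lst m ! l \<subseteq> X m"
    if m: "t0 \<le> m" and l: "r < l" "l < k m" "ex m ! l \<noteq> {}" "ex m ! l \<subseteq> ex m ! r" for m l
  proof -
    have "Lst m ! l \<subseteq> Lst m ! r \<or> Lst m ! r \<inter> Lst m ! l = {}"
      using lam_Lst[of m, unfolded lam_def, rule_format, OF l(1,2)] .
    then show ?thesis
    proof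
      assume "Lst m ! l \<subseteq> Lst m ! r" then show ?thesis by (simp add: X_def)
    next
      assume "Lst m ! r \<inter> Lst m ! l = {}"
      then have "D m (Lst m ! r) \<inter> D m (Lst m ! l) = {}" by (rule dgood_disj[OF dgoodD])
      then have "ex m ! r \<inter> ex m ! l = {}" using ex_old[OF l(2)] ex_old[OF rk[OF m]] by simp
      then show ?thesis using l(3,4) by blast
    qed
  qed
  define P where "P g m \<longleftrightarrow> (\<forall>j. r < j \<and> j < k m \<and> Lst m ! j \<subseteq> X m \<longrightarrow>
      (\<forall>y\<in>Lst m ! j. \<exists>s e. g < s \<and> s + e = m \<and> anc s e y \<in> F))" for g m
  have Wstep: "\<exists>s e. g < s \<and> s + e = Suc m \<and> anc s e y \<in> F"
    if m: "t0 \<le> m" "Suc g \<le> m" and Pm: "P g m" and l: "r < l" "l < 2 * k m" "ex m ! l \<subseteq> ex m ! r" "y \<in> ex m ! l"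
    for g m l y
  proof (cases "l < k m")
    case True
    have "y \<in> D m (Lst m ! l)" using l(4) ex_old[OF True] by simp
    then obtain z where z: "z \<in> Lst m ! l" "E m z y" by (auto simp: D_def)
    have pz: "par m y = z" by (rule par_eq[OF z(2)])
    have ne: "ex m ! l \<noteq> {}" using l(4) by blast
    have sub: "Lst m ! l \<subseteq> X m" by (rule olddesc[OF m(1) l(1) True ne l(3)])
    from Pm have Pl: "r < l \<and> l < k m \<and> Lst m ! l \<subseteq> X m \<longrightarrow>
      (\<forall>y\<in>Lst m ! l. \<exists>s e. g < s \<and> s + e = m \<and> anc s e y \<in> F)" unfolding P_def by (rule spec)
    have "\<forall>y\<in>Lst m ! l. \<exists>s e. g < s \<and> s + e = m \<and> anc s e y \<in> F" using Pl l(1) True sub by simp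
    then obtain s e where se: "g < s" "s + e = m" "anc s e z \<in> F" using z(1) by blast
    have "anc s (Suc e) y = anc s e z" using pz se(2) by simp
    then show ?thesis using se by (intro exI[of _ s] exI[of _ "Suc e"]) simp
  next
    case False
    define i where "i = l - k m"
    have i: "l = k m + i" "i < k m" using False l(2) unfolding i_def by linarith+
    have "ex m ! l = D m (newn F (Lst m) i)" unfolding i(1) by (rule ex_new[OF i(2)])
    then have "y \<in> D m (newn F (Lst m) i)" using l(4) by simp
    then obtain z where z: "z \<in> newn F (Lst m) i" "E m z y" by (auto simp: D_def)
    have pz: "par m y = z" by (rule par_eq[OF z(2)])
    have "z \<in> F" using newn_sub(2)[of F "Lst m" i] z(1) by (rule subsetD)
    then have "anc m (Suc 0) y \<in> F" using pz by simp
    moreover have "g < m" using m(2) by simp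
    ultimately show ?thesis by (intro exI[of _ m] exI[of _ "Suc 0"]) simp
  qed
  have Pall: "P g m" if g: "t0 \<le> g" "gr g r" and m: "Suc g \<le> m" for g m
    using m
  proof (induction m rule: dec_induct)
    case base
    show ?case unfolding P_def
    proof (intro allI impI)
      fix j assume j: "r < j \<and> j < k (Suc g) \<and> Lst (Suc g) ! j \<subseteq> X (Suc g)"
      from dchar[OF g(1)] j obtain l where l: "r < l" "kp g l" "ex g ! l \<subseteq> ex g ! r" by blast
      have "\<exists>i<l. gr g i \<and> ex g ! l \<subseteq> ex g ! i" using l(1,3) g(2) by blast
      then have "\<not> kp g l" by (simp add: keep_def)
      then show "\<forall>y\<in>Lst (Suc g) ! j. \<exists>s e. g < s \<and> s + e = Suc g \<and> anc s e y \<in> F" using l(2) by simp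
    qed
  next
    case (step n)
    have n0: "t0 \<le> n" using step.hyps g(1) by simp
    show ?case unfolding P_def
    proof (intro allI impI ballI)
      fix j y assume j: "r < j \<and> j < k (Suc n) \<and> Lst (Suc n) ! j \<subseteq> X (Suc n)" and y: "y \<in> Lst (Suc n) ! j"
      from dchar[OF n0] j obtain l where l: "r < l" "l < 2 * k n" "Lst (Suc n) ! j = ex n ! l" "ex n ! l \<subseteq> ex n ! r" by blast
      show "\<exists>s e. g < s \<and> s + e = Suc n \<and> anc s e y \<in> F"
        by (rule Wstep[OF n0 step.hyps(1) step.IH l(1,2,4)]) (use y l(3) in simp)
    qed
  qed
  have Wgreen: "\<forall>y\<in>X (Suc t). \<exists>s e. g < s \<and> s + e = Suc t \<and> anc s e y \<in> F"
    if g: "t0 \<le> g" "gr g r" and t: "Suc g \<le> t" "gr t r" for g t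
  proof
    fix y assume y: "y \<in> X (Suc t)"
    have t0t: "t0 \<le> t" using g(1) t(1) by simp
    have "X (Suc t) = ex t ! r" using Xstep[OF t0t] by (simp add: X_def)
    also have "\<dots> = descs (ex t) r" using t(2) by (simp add: green_def)
    finally have "y \<in> descs (ex t) r" using y by simp
    then obtain l where l: "r < l" "l < length (ex t)" "ex t ! l \<subseteq> ex t ! r" "y \<in> ex t ! l"
      unfolding descs_def by blast
    show "\<exists>s e. g < s \<and> s + e = Suc t \<and> anc s e y \<in> F"
      by (rule Wstep[OF t0t t(1) Pall[OF g t(1)] l(1) _ l(3,4)]) (use l(2) in simp)
  qed
  have "\<forall>m\<ge>t0. X m \<noteq> {} \<and> X m \<subseteq> S m \<and> X (Suc m) = D m (X m)" using Xp by blast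
  from koenig[OF this] obtain x0 where x0: "\<forall>m\<ge>t0. x0 m \<in> X m \<and> E m (x0 m) (x0 (Suc m))" by blast
  define x where "x m = (if m < t0 then anc m (t0 - m) (x0 t0) else x0 m)" for m
  have x0S: "x0 t0 \<in> S t0" using x0 Xp[of t0] by blast
  have xS: "x m \<in> S m" for m
  proof (cases "m < t0")
    case True
    have "x0 t0 \<in> S (m + (t0 - m))" using x0S True by simp
    then show ?thesis using True anc_S unfolding x_def by simp
  next
    case False
    then have "t0 \<le> m" by simp
    then have "x0 m \<in> X m" "X m \<subseteq> S m" using x0 Xp[of m] by blast+
    then show ?thesis using False unfolding x_def by auto
  qed
  have xpath: "\<forall>m. E m (x m) (x (Suc m))"
  proof
    fix m show "E m (x m) (x (Suc m))"
    proof (cases "m < t0")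
      case True
      define e where "e = t0 - Suc m"
      have te: "t0 - m = Suc 0 + e" using True unfolding e_def by simp
      have xs: "x (Suc m) = anc (Suc m) e (x0 t0)"
      proof (cases "Suc m < t0")
        case True then show ?thesis unfolding x_def e_def by simp
      next
        case False
        then have "Suc m = t0" using \<open>m < t0\<close> by simp
        then show ?thesis unfolding x_def e_def by simp
      qed
      have "x m = anc m (Suc 0 + e) (x0 t0)" using True te unfolding x_def by simp
      also have "\<dots> = anc m (Suc 0) (anc (m + Suc 0) e (x0 t0))" by (rule anc_split)
      also have "\<dots> = par m (x (Suc m))" using xs by simp
      finally have "x m = par m (x (Suc m))" .
      then show ?thesis using par_E[OF xS[of "Suc m"]] by simp
    next
      case False
      then show ?thesis using x0 unfolding x_def by simp
    qed
  qed
  have "\<exists>\<^sub>\<infinity>m. x m \<in> F"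
    unfolding INFM_nat_le
  proof
    fix g0
    have "\<exists>\<^sub>\<infinity>m. gr m r \<and> max g0 t0 \<le> m" by (rule INFM_conjI[OF grinf MOST_geT])
    then obtain g where g: "gr g r" "max g0 t0 \<le> g" using INFM_EX by blast
    have "\<exists>\<^sub>\<infinity>m. gr m r \<and> Suc g \<le> m" by (rule INFM_conjI[OF grinf MOST_geT])
    then obtain t where t: "gr t r" "Suc g \<le> t" using INFM_EX by blast
    have g0: "t0 \<le> g" using g(2) by simp
    have "x (Suc t) = x0 (Suc t)" using g0 t(2) unfolding x_def by simp
    moreover have "x0 (Suc t) \<in> X (Suc t)" using x0 g0 t(2) by simp
    ultimately have "x (Suc t) \<in> X (Suc t)" by simp
    with Wgreen[OF g0 g(1) t(2,1)] obtain s e where se: "g < s" "s + e = Suc t" "anc s e (x (Suc t)) \<in> F" by blast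
    have "anc s e (x (s + e)) = x s" by (rule anc_path[OF xpath])
    then have "x s \<in> F" using se by simp
    moreover have "g0 \<le> s" using se(1) g(2) by simp
    ultimately show "\<exists>n\<ge>g0. x n \<in> F" by blast
  qed
  then show ?thesis using xpath by blast
qed

theorem acc_iff:
  "even (Min Infs) \<longleftrightarrow> (\<exists>x. (\<forall>m. E m (x m) (x (Suc m))) \<and> (\<exists>\<^sub>\<infinity>m. x m \<in> F))"
  using sound complete by blast

end



definition live :: "('q \<times> 'a \<times> 'q) set \<Rightarrow> 'q \<Rightarrow> bool" where
  "live Delta q \<longleftrightarrow> (\<exists>r u. r 0 = q \<and> (\<forall>i. (r i, u i, r (Suc i)) \<in> Delta))"
definition cnew :: "('q set \<times> nat) set \<Rightarrow> ('q set \<times> nat \<Rightarrow> nat) \<Rightarrow> 'q \<Rightarrow> ('q set \<times> nat \<Rightarrow> nat)" where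
  "cnew Obl c y = (\<lambda>ob. if ob \<in> Obl then (if y \<in> fst ob then 0 else Suc (c ob)) else undefined)"
definition czero :: "('q set \<times> nat) set \<Rightarrow> ('q set \<times> nat \<Rightarrow> nat)" where
  "czero Obl = (\<lambda>ob. if ob \<in> Obl then 0 else undefined)"
definition cok :: "('q set \<times> nat) set \<Rightarrow> ('q set \<times> nat \<Rightarrow> nat) \<Rightarrow> bool" where
  "cok Obl c \<longleftrightarrow> (\<forall>ob\<in>Obl. c ob < snd ob)"
definition rootset :: "'q set list \<Rightarrow> 'q set" where
  "rootset L = (if L = [] then {} else L ! 0)"

fun cnt :: "(nat \<Rightarrow> 'q) \<Rightarrow> 'q set \<Rightarrow> nat \<Rightarrow> nat" where
  "cnt p G 0 = (if p 0 \<in> G then 0 else 1)"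
| "cnt p G (Suc i) = (if p (Suc i) \<in> G then 0 else Suc (cnt p G i))"

lemma cnt_run: "u < cnt p G i \<Longrightarrow> u \<le> i \<and> p (i - u) \<notin> G"
proof (induction i arbitrary: u)
  case 0 then show ?case by (simp split: if_splits)
next
  case (Suc i)
  show ?case
  proof (cases "p (Suc i) \<in> G")
    case True then show ?thesis using Suc.prems by simp
  next
    case False
    show ?thesis
    proof (cases u)
      case 0 then show ?thesis using False by simp
    next
      case (Suc u')
      then have "u' < cnt p G i" using Suc.prems False by simp
      from Suc.IH[OF this] show ?thesis using Suc by simp
    qed
  qed
qed

lemma cnt_grow: "(\<forall>m\<in>{i..<i+b}. p m \<notin> G) \<Longrightarrow> t < b \<Longrightarrow> t + 1 \<le> cnt p G (i + t)"
proof (induction t)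
  case 0
  have "p i \<notin> G" using 0 by simp
  then show ?case by (cases i) simp_all
next
  case (Suc t)
  have "p (Suc (i + t)) \<notin> G" using Suc.prems by simp
  then show ?case using Suc by simp
qed

lemma infix_cnt: "infix_cond p G b \<longleftrightarrow> (\<forall>i. cnt p G i < b)"
proof
  assume inf: "infix_cond p G b"
  show "\<forall>i. cnt p G i < b"
  proof (rule ccontr)
    assume "\<not> (\<forall>i. cnt p G i < b)"
    then obtain i where i: "b \<le> cnt p G i" by (auto simp: not_less)
    show False
    proof (cases "b = 0")
      case True then show False using inf by (simp add: infix_cond_def)
    next
      case False
      have bi: "b - 1 \<le> i" using cnt_run[of "b - 1" p G i] i False by simp
      define j where "j = i + 1 - b"
      have "\<exists>m\<in>{j..<j+b}. p m \<in> G" using inf by (simp add: infix_cond_def)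
      then obtain m where m: "j \<le> m" "m < j + b" "p m \<in> G" by auto
      define u where "u = i - m"
      have "u < b" using m bi False unfolding u_def j_def by linarith
      then have "u < cnt p G i" using i by simp
      from cnt_run[OF this] have "p (i - u) \<notin> G" by simp
      moreover have "i - u = m" using m bi False unfolding u_def j_def by linarith
      ultimately show False using m(3) by simp
    qed
  qed
next
  assume c: "\<forall>i. cnt p G i < b"
  show "infix_cond p G b" unfolding infix_cond_def
  proof (rule ccontr)
    assume "\<not> (\<forall>i. \<exists>m\<in>{i..<i + b}. p m \<in> G)"
    then obtain i where i: "\<forall>m\<in>{i..<i+b}. p m \<notin> G" by blast
    have b0: "b > 0" using c by (metis gr_zeroI not_less_zero)
    from cnt_grow[OF i, of "b - 1"] b0 have "b \<le> cnt p G (i + (b - 1))" by simp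
    then show False using c by (metis not_less)
  qed
qed

locale aut =
  fixes Q :: "'q set" and Sig :: "'a set" and Q0 :: "'q set"
    and Delta :: "('q \<times> 'a \<times> 'q) set" and F :: "'q set"
    and Obl :: "('q set \<times> nat) set"
  assumes wf: "buchi_wf Q Sig Q0 Delta F"
    and nc: "non_confluent Q0 Delta"
    and finO: "finite Obl"
    and oblQ: "\<forall>(G, b)\<in>Obl. G \<subseteq> Q \<and> b > 0"
begin

abbreviation "n \<equiv> card Q"

lemma finQ: "finite Q" using wf by (simp add: buchi_wf_def)
lemma Q0Q: "Q0 \<subseteq> Q" using wf by (simp add: buchi_wf_def)
lemma DeltaQ: "(x, a, y) \<in> Delta \<Longrightarrow> x \<in> Q \<and> a \<in> Sig \<and> y \<in> Q" using wf by (auto simp: buchi_wf_def)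
lemma obl_pos: "ob \<in> Obl \<Longrightarrow> 0 < snd ob" using oblQ by auto

definition Ed :: "'q set list \<Rightarrow> ('q \<Rightarrow> 'q set \<times> nat \<Rightarrow> nat) \<Rightarrow> 'a \<Rightarrow> 'q \<Rightarrow> 'q \<Rightarrow> bool" where
  "Ed L c a x y \<longleftrightarrow> x \<in> rootset L \<and> (x, a, y) \<in> Delta \<and> live Delta y \<and> cok Obl (cnew Obl (c x) y)"
definition Dd :: "'q set list \<Rightarrow> ('q \<Rightarrow> 'q set \<times> nat \<Rightarrow> nat) \<Rightarrow> 'a \<Rightarrow> 'q set \<Rightarrow> 'q set" where
  "Dd L c a X = {y. \<exists>x\<in>X. Ed L c a x y}"

definition step :: "'q set list \<times> ('q \<Rightarrow> 'q set \<times> nat \<Rightarrow> nat) \<times> nat \<Rightarrow> 'a \<Rightarrow> 'q set list \<times> ('q \<Rightarrow> 'q set \<times> nat \<Rightarrow> nat) \<times> nat" where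
  "step s a = (case s of (L, c, p) \<Rightarrow>
     (snext F (Dd L c a) L,
      (\<lambda>y. if y \<in> Dd L c a (rootset L) then cnew Obl (c (SOME x. Ed L c a x y)) y
           else if y \<in> Q then czero Obl else undefined),
      sprio F (Dd L c a) n L))"

definition S0 :: "'q set" where "S0 = {y \<in> Q0. live Delta y \<and> cok Obl (cnew Obl (czero Obl) y)}"
definition init :: "'q set list \<times> ('q \<Rightarrow> 'q set \<times> nat \<Rightarrow> nat) \<times> nat" where
  "init = ((if S0 = {} then [] else [S0]),
           (\<lambda>y. if y \<in> S0 then cnew Obl (czero Obl) y else if y \<in> Q then czero Obl else undefined), 2*n+1)"

fun arun :: "(nat \<Rightarrow> 'a) \<Rightarrow> nat \<Rightarrow> 'q set list \<times> ('q \<Rightarrow> 'q set \<times> nat \<Rightarrow> nat) \<times> nat" where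
  "arun w 0 = init"
| "arun w (Suc m) = step (arun w m) (w m)"

fun cv :: "(nat \<Rightarrow> 'q) \<Rightarrow> nat \<Rightarrow> ('q set \<times> nat \<Rightarrow> nat)" where
  "cv p 0 = cnew Obl (czero Obl) (p 0)"
| "cv p (Suc i) = cnew Obl (cv p i) (p (Suc i))"

definition vp :: "(nat \<Rightarrow> 'a) \<Rightarrow> nat \<Rightarrow> (nat \<Rightarrow> 'q) \<Rightarrow> bool" where
  "vp w m p \<longleftrightarrow> p 0 \<in> Q0 \<and> (\<forall>i<m. (p i, w i, p (Suc i)) \<in> Delta) \<and> (\<forall>i\<le>m. live Delta (p i)) \<and> (\<forall>i\<le>m. cok Obl (cv p i))"
definition SS :: "(nat \<Rightarrow> 'a) \<Rightarrow> nat \<Rightarrow> 'q set" where "SS w m = {y. \<exists>p. vp w m p \<and> p m = y}"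
definition Es :: "(nat \<Rightarrow> 'a) \<Rightarrow> nat \<Rightarrow> 'q \<Rightarrow> 'q \<Rightarrow> bool" where
  "Es w m x y \<longleftrightarrow> (\<exists>p. vp w (Suc m) p \<and> p m = x \<and> p (Suc m) = y)"

lemma cv_cong: "(\<forall>j\<le>i. p j = p' j) \<Longrightarrow> cv p i = cv p' i"
  by (induction i) auto

lemma vp_cong: "(\<forall>j\<le>m. p j = p' j) \<Longrightarrow> vp w m p \<Longrightarrow> vp w m p'"
proof -
  assume eq: "\<forall>j\<le>m. p j = p' j" and v: "vp w m p"
  have "\<forall>i\<le>m. cv p i = cv p' i" using eq by (intro allI impI cv_cong) auto
  then show ?thesis using eq v unfolding vp_def by auto
qed

lemma vp_mono: "vp w m p \<Longrightarrow> m' \<le> m \<Longrightarrow> vp w m' p"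
  unfolding vp_def by auto

lemma vp_Suc:
  assumes "vp w m p" "(p m, w m, y) \<in> Delta" "live Delta y" "cok Obl (cnew Obl (cv p m) y)"
  shows "vp w (Suc m) (p(Suc m := y))"
proof -
  let ?p = "p(Suc m := y)"
  have cvs: "cv ?p i = cv p i" if "i \<le> m" for i using that by (intro cv_cong) auto
  have cvS: "cv ?p (Suc m) = cnew Obl (cv p m) y" using cvs[of m] by simp
  show ?thesis unfolding vp_def
  proof (intro conjI allI impI)
    show "?p 0 \<in> Q0" using assms(1) by (simp add: vp_def)
  next
    fix i assume "i < Suc m"
    then show "(?p i, w i, ?p (Suc i)) \<in> Delta" using assms(1,2) by (cases "i = m") (auto simp: vp_def)
  next
    fix i assume "i \<le> Suc m"
    then show "live Delta (?p i)" using assms(1,3) by (cases "i = Suc m") (auto simp: vp_def)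
  next
    fix i assume i: "i \<le> Suc m"
    show "cok Obl (cv ?p i)"
    proof (cases "i = Suc m")
      case True then show ?thesis using cvS assms(4) by simp
    next
      case False then have "i \<le> m" using i by simp
      then show ?thesis using cvs assms(1) by (simp add: vp_def)
    qed
  qed
qed

lemma vp_uniq:
  assumes v: "vp w m p" "vp w m p'" and eq: "p m = p' m"
  shows "\<forall>i\<le>m. p i = p' i"
proof -
  have "live Delta (p m)" using v(1) by (simp add: vp_def)
  then obtain r u where r: "r 0 = p m" "\<forall>i. (r i, u i, r (Suc i)) \<in> Delta" by (auto simp: live_def)
  define w' where "w' i = (if i < m then w i else u (i - m))" for i
  have run: "buchi_run Q0 Delta w' (\<lambda>i. if i \<le> m then q i else r (i - m))"
    if q: "vp w m q" "q m = p m" for q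
    unfolding buchi_run_def
  proof (intro conjI allI)
    show "(if 0 \<le> m then q 0 else r (0 - m)) \<in> Q0" using q(1) by (simp add: vp_def)
  next
    fix i
    show "((if i \<le> m then q i else r (i - m)), w' i, (if Suc i \<le> m then q (Suc i) else r (Suc i - m))) \<in> Delta"
    proof (cases "i < m")
      case True then show ?thesis using q(1) by (simp add: vp_def w'_def)
    next
      case False
      show ?thesis
      proof (cases "i = m")
        case True
        have "(r 0, u 0, r (Suc 0)) \<in> Delta" using r(2) by blast
        then show ?thesis using True r(1) q(2) by (simp add: w'_def)
      next
        case False2: False
        then have "m < i" using False by simp
        moreover have "Suc i - m = Suc (i - m)" using \<open>m < i\<close> by simp
        ultimately show ?thesis using r by (simp add: w'_def)
      qed
    qed
  qed
  have r1: "buchi_run Q0 Delta w' (\<lambda>i. if i \<le> m then p i else r (i - m))" by (rule run[OF v(1)]) simp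
  have r2: "buchi_run Q0 Delta w' (\<lambda>i. if i \<le> m then p' i else r (i - m))" by (rule run[OF v(2)]) (simp add: eq)
  have "\<forall>m'<m. (\<lambda>i. if i \<le> m then p i else r (i - m)) m' = (\<lambda>i. if i \<le> m then p' i else r (i - m)) m'"
  proof -
    have "\<forall>mm. (\<lambda>i. if i \<le> m then p i else r (i - m)) mm = (\<lambda>i. if i \<le> m then p' i else r (i - m)) mm \<longrightarrow>
      (\<forall>m'<mm. (\<lambda>i. if i \<le> m then p i else r (i - m)) m' = (\<lambda>i. if i \<le> m then p' i else r (i - m)) m')"
      using nc r1 r2 unfolding non_confluent_def by blast
    then have h: "(\<lambda>i. if i \<le> m then p i else r (i - m)) m = (\<lambda>i. if i \<le> m then p' i else r (i - m)) m \<longrightarrow>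
      (\<forall>m'<m. (\<lambda>i. if i \<le> m then p i else r (i - m)) m' = (\<lambda>i. if i \<le> m then p' i else r (i - m)) m')"
      by (rule spec)
    have "(\<lambda>i. if i \<le> m then p i else r (i - m)) m = (\<lambda>i. if i \<le> m then p' i else r (i - m)) m" using eq by simp
    with h show ?thesis by simp
  qed
  then show ?thesis using eq by (metis le_eq_less_or_eq less_imp_le_nat)
qed

lemma SS_Q: "SS w m \<subseteq> Q"
proof
  fix y assume "y \<in> SS w m"
  then obtain p where p: "vp w m p" "p m = y" by (auto simp: SS_def)
  show "y \<in> Q"
  proof (cases m)
    case 0 then show ?thesis using p Q0Q by (auto simp: vp_def)
  next
    case (Suc m')
    then have "(p m', w m', p m) \<in> Delta" using p(1) by (simp add: vp_def)
    then show ?thesis using DeltaQ p(2) by blast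
  qed
qed

lemma stree_inst: "stree (SS w) (Es w) n"
proof
  fix m
  show "finite (SS w m)" using SS_Q finQ finite_subset by blast
  show "card (SS w m) \<le> n" using SS_Q finQ by (rule card_mono[rotated])
next
  fix m x y assume "Es w m x y"
  then obtain p where p: "vp w (Suc m) p" "p m = x" "p (Suc m) = y" by (auto simp: Es_def)
  have "vp w m p" using p(1) vp_mono by simp
  then show "x \<in> SS w m" using p(2) by (auto simp: SS_def)
next
  fix m x y assume "Es w m x y"
  then show "y \<in> SS w (Suc m)" by (auto simp: Es_def SS_def)
next
  fix m y assume "y \<in> SS w (Suc m)"
  then show "\<exists>x. Es w m x y" by (auto simp: Es_def SS_def)
next
  fix m x y x' assume "Es w m x y" "Es w m x' y"
  then obtain p p' where p: "vp w (Suc m) p" "p m = x" "p (Suc m) = y"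
    and p': "vp w (Suc m) p'" "p' m = x'" "p' (Suc m) = y" by (auto simp: Es_def)
  from vp_uniq[OF p(1) p'(1)] p(3) p'(3) have "p m = p' m" by simp
  then show "x = x'" using p(2) p'(2) by simp
qed

abbreviation "LL w m \<equiv> stree.Lst (SS w) (Es w) F m"
abbreviation "PP w m \<equiv> stree.pr (SS w) (Es w) F n m"
abbreviation "DD w m \<equiv> stree.D (Es w) m"

lemma root_LL: "rootset (LL w m) = SS w m"
proof -
  have "sinv (SS w m) (LL w m)" by (rule stree.inv[OF stree_inst])
  then show ?thesis unfolding sinv_def rootset_def by auto
qed

lemma S0_eq: "S0 = SS w 0"
proof
  show "S0 \<subseteq> SS w 0"
  proof
    fix y assume y: "y \<in> S0"
    have "vp w 0 (\<lambda>_. y)" using y by (simp add: S0_def vp_def)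
    then show "y \<in> SS w 0" by (auto simp: SS_def)
  qed
  show "SS w 0 \<subseteq> S0"
  proof
    fix y assume "y \<in> SS w 0"
    then obtain p where "vp w 0 p" "p 0 = y" by (auto simp: SS_def)
    then show "y \<in> S0" by (auto simp: S0_def vp_def)
  qed
qed

definition J :: "(nat \<Rightarrow> 'a) \<Rightarrow> nat \<Rightarrow> ('q \<Rightarrow> 'q set \<times> nat \<Rightarrow> nat) \<Rightarrow> bool" where
  "J w m c \<longleftrightarrow> (\<forall>y p. vp w m p \<longrightarrow> p m = y \<longrightarrow> c y = cv p m) \<and>
     (\<forall>y. y \<notin> SS w m \<longrightarrow> c y = (if y \<in> Q then czero Obl else undefined))"

lemma Ed_Es:
  assumes J: "J w m c"
  shows "Ed (LL w m) c (w m) x y \<longleftrightarrow> Es w m x y"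
proof
  assume e: "Ed (LL w m) c (w m) x y"
  then have "x \<in> SS w m" using root_LL by (simp add: Ed_def)
  then obtain p where p: "vp w m p" "p m = x" by (auto simp: SS_def)
  have cx: "c x = cv p m" using J[unfolded J_def] p by blast
  have "vp w (Suc m) (p(Suc m := y))"
    by (rule vp_Suc[OF p(1)]) (use e p(2) cx in \<open>simp_all add: Ed_def\<close>)
  then show "Es w m x y" unfolding Es_def using p(2) by (intro exI[of _ "p(Suc m := y)"]) simp
next
  assume "Es w m x y"
  then obtain p where p: "vp w (Suc m) p" "p m = x" "p (Suc m) = y" by (auto simp: Es_def)
  have pm: "vp w m p" using p(1) vp_mono by simp
  then have xS: "x \<in> SS w m" using p(2) by (auto simp: SS_def)
  have cx: "c x = cv p m" using J[unfolded J_def] pm p(2) by blast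
  have "(x, w m, y) \<in> Delta" "live Delta y" "cok Obl (cv p (Suc m))"
    using p unfolding vp_def by auto
  then show "Ed (LL w m) c (w m) x y" using xS root_LL cx p(3) by (simp add: Ed_def)
qed

lemma Dd_DD: "J w m c \<Longrightarrow> Dd (LL w m) c (w m) = DD w m"
  using Ed_Es by (auto simp: Dd_def stree.D_def[OF stree_inst] fun_eq_iff)

lemma sim: "fst (arun w m) = LL w m \<and> J w m (fst (snd (arun w m)))"
proof (induction m)
  case 0
  have "J w 0 (fst (snd init))" unfolding J_def
  proof (intro conjI allI impI)
    fix y p assume "vp w 0 p" "p 0 = y"
    then have "y \<in> S0" using S0_eq by (auto simp: SS_def)
    then show "fst (snd init) y = cv p 0" using \<open>p 0 = y\<close> by (simp add: init_def)
  next
    fix y assume "y \<notin> SS w 0"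
    then show "fst (snd init) y = (if y \<in> Q then czero Obl else undefined)" using S0_eq by (simp add: init_def)
  qed
  moreover have "fst init = LL w 0" using S0_eq[of w] by (simp add: init_def stree.Lst.simps[OF stree_inst])
  ultimately show ?case by simp
next
  case (Suc m)
  obtain L c pp where a: "arun w m = (L, c, pp)" by (metis prod.exhaust)
  have L: "L = LL w m" and J: "J w m c" using Suc a by simp_all
  have DD: "Dd L c (w m) = DD w m" using Dd_DD[OF J] L by simp
  have root: "rootset L = SS w m" using root_LL L by simp
  have DS: "DD w m (SS w m) = SS w (Suc m)"
    using stree.dgoodD[OF stree_inst, of w m] by (simp add: dgood_def)
  have st: "arun w (Suc m) = (snext F (DD w m) L,
      (\<lambda>y. if y \<in> SS w (Suc m) then cnew Obl (c (SOME x. Ed L c (w m) x y)) y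
           else if y \<in> Q then czero Obl else undefined),
      sprio F (DD w m) n L)"
    using a DD root DS by (simp add: step_def)
  have "fst (arun w (Suc m)) = LL w (Suc m)" using st L by (simp add: stree.Lst.simps[OF stree_inst])
  moreover have "J w (Suc m) (fst (snd (arun w (Suc m))))" unfolding J_def
  proof (intro conjI allI impI)
    fix y p assume p: "vp w (Suc m) p" "p (Suc m) = y"
    then have yS: "y \<in> SS w (Suc m)" by (auto simp: SS_def)
    have es: "Es w m (p m) y" using p by (auto simp: Es_def)
    define x0 where "x0 = (SOME x. Ed L c (w m) x y)"
    have "Ed L c (w m) (p m) y" using es Ed_Es[OF J] L by simp
    then have "Ed L c (w m) x0 y" unfolding x0_def by (rule someI)
    then have "Es w m x0 y" using Ed_Es[OF J] L by simp
    then have x0: "x0 = p m" using stree.uniq[OF stree_inst es] by simp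
    have pm: "vp w m p" using p(1) vp_mono by simp
    have "c x0 = cv p m" using J[unfolded J_def] pm x0 by blast
    then show "fst (snd (arun w (Suc m))) y = cv p (Suc m)" using st yS p(2) x0_def by simp
  next
    fix y assume "y \<notin> SS w (Suc m)"
    then show "fst (snd (arun w (Suc m))) y = (if y \<in> Q then czero Obl else undefined)" using st by simp
  qed
  ultimately show ?case by simp
qed

lemma prio_sim: "snd (snd (arun w (Suc m))) = PP w m"
proof -
  obtain L c pp where a: "arun w m = (L, c, pp)" by (metis prod.exhaust)
  have L: "L = LL w m" and J: "J w m c" using sim[of w m] a by simp_all
  have DD: "Dd L c (w m) = DD w m" using Dd_DD[OF J] L by simp
  show ?thesis using a DD L by (simp add: step_def stree.pr_def[OF stree_inst])
qed

lemma cv_cnt: "ob \<in> Obl \<Longrightarrow> cv p i ob = cnt p (fst ob) i"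
  by (induction i) (auto simp: cnew_def czero_def)

lemma cok_all: "(\<forall>i. cok Obl (cv p i)) \<longleftrightarrow> (\<forall>(G, b)\<in>Obl. infix_cond p G b)"
proof -
  have "(\<forall>i. cok Obl (cv p i)) \<longleftrightarrow> (\<forall>ob\<in>Obl. \<forall>i. cnt p (fst ob) i < snd ob)"
    unfolding cok_def using cv_cnt by auto
  also have "\<dots> \<longleftrightarrow> (\<forall>(G, b)\<in>Obl. infix_cond p G b)"
    by (simp add: infix_cnt case_prod_unfold)
  finally show ?thesis .
qed

lemma path_vp:
  assumes path: "\<forall>m. Es w m (x m) (x (Suc m))"
  shows "vp w m x"
proof (induction m)
  case 0
  from path obtain p where p: "vp w (Suc 0) p" "p 0 = x 0" unfolding Es_def by blast
  have "vp w 0 p" using p(1) vp_mono by simp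
  then show ?case by (rule vp_cong[rotated]) (use p(2) in simp)
next
  case (Suc m)
  from path obtain p where p: "vp w (Suc m) p" "p m = x m" "p (Suc m) = x (Suc m)" unfolding Es_def by blast
  have "vp w m p" using p(1) vp_mono by simp
  from vp_uniq[OF this Suc.IH p(2)] p(3) have "\<forall>j\<le>Suc m. p j = x j" by (metis le_Suc_eq)
  then show ?case using p(1) by (rule vp_cong)
qed

lemma path_run:
  "(\<exists>x. (\<forall>m. Es w m (x m) (x (Suc m))) \<and> (\<exists>\<^sub>\<infinity>m. x m \<in> F)) \<longleftrightarrow>
   (\<exists>\<rho>. buchi_run Q0 Delta w \<rho> \<and> buchi_accepting F \<rho> \<and> (\<forall>(G, b)\<in>Obl. infix_cond \<rho> G b))"
proof
  assume "\<exists>x. (\<forall>m. Es w m (x m) (x (Suc m))) \<and> (\<exists>\<^sub>\<infinity>m. x m \<in> F)"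
  then obtain x where x: "\<forall>m. Es w m (x m) (x (Suc m))" "\<exists>\<^sub>\<infinity>m. x m \<in> F" by blast
  have v: "vp w m x" for m by (rule path_vp[OF x(1)])
  have "buchi_run Q0 Delta w x" unfolding buchi_run_def
  proof (intro conjI allI)
    show "x 0 \<in> Q0" using v[of 0] by (simp add: vp_def)
    fix m show "(x m, w m, x (Suc m)) \<in> Delta" using v[of "Suc m"] by (simp add: vp_def)
  qed
  moreover have "buchi_accepting F x" using x(2) by (simp add: buchi_accepting_def)
  moreover have "\<forall>i. cok Obl (cv x i)"
  proof
    fix i show "cok Obl (cv x i)" using v[of i] by (simp add: vp_def)
  qed
  then have "\<forall>(G, b)\<in>Obl. infix_cond x G b" using cok_all by blast
  ultimately show "\<exists>\<rho>. buchi_run Q0 Delta w \<rho> \<and> buchi_accepting F \<rho> \<and> (\<forall>(G, b)\<in>Obl. infix_cond \<rho> G b)" by blast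
next
  assume "\<exists>\<rho>. buchi_run Q0 Delta w \<rho> \<and> buchi_accepting F \<rho> \<and> (\<forall>(G, b)\<in>Obl. infix_cond \<rho> G b)"
  then obtain \<rho> where r: "buchi_run Q0 Delta w \<rho>" "buchi_accepting F \<rho>" "\<forall>(G, b)\<in>Obl. infix_cond \<rho> G b" by blast
  have tr: "(\<rho> i, w i, \<rho> (Suc i)) \<in> Delta" for i using r(1) by (simp add: buchi_run_def)
  have lv: "live Delta (\<rho> i)" for i
    unfolding live_def by (rule exI[of _ "\<lambda>j. \<rho> (i+j)"], rule exI[of _ "\<lambda>j. w (i+j)"]) (simp add: tr)
  have ck: "\<forall>i. cok Obl (cv \<rho> i)" using r(3) cok_all by blast
  have v: "vp w m \<rho>" for m using r(1) lv ck tr by (simp add: vp_def buchi_run_def)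
  have "\<forall>m. Es w m (\<rho> m) (\<rho> (Suc m))" unfolding Es_def using v by blast
  moreover have "\<exists>\<^sub>\<infinity>m. \<rho> m \<in> F" using r(2) by (simp add: buchi_accepting_def)
  ultimately show "\<exists>x. (\<forall>m. Es w m (x m) (x (Suc m))) \<and> (\<exists>\<^sub>\<infinity>m. x m \<in> F)" by blast
qed

lemma INFM_Suc_iff: "(\<exists>\<^sub>\<infinity>m. P (Suc m)) \<longleftrightarrow> (\<exists>\<^sub>\<infinity>m. P m)"
  using MOST_Suc_iff[of "\<lambda>m. \<not> P m"] by (simp add: not_INFM[symmetric] del: not_INFM)

lemma acc_arun:
  "even (Min {pp. \<exists>\<^sub>\<infinity>m. snd (snd (arun w m)) = pp}) \<longleftrightarrow>
   (\<exists>\<rho>. buchi_run Q0 Delta w \<rho> \<and> buchi_accepting F \<rho> \<and> (\<forall>(G, b)\<in>Obl. infix_cond \<rho> G b))"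
proof -
  have "{pp. \<exists>\<^sub>\<infinity>m. snd (snd (arun w m)) = pp} = {pp. \<exists>\<^sub>\<infinity>m. snd (snd (arun w (Suc m))) = pp}"
    using INFM_Suc_iff[of "\<lambda>m. snd (snd (arun w m)) = _"] by auto
  also have "\<dots> = stree.Infs (SS w) (Es w) F n"
    by (simp only: prio_sim stree.Infs_def[OF stree_inst])
  finally have "{pp. \<exists>\<^sub>\<infinity>m. snd (snd (arun w m)) = pp} = stree.Infs (SS w) (Es w) F n" .
  then show ?thesis using stree.acc_iff[OF stree_inst] path_run by simp
qed

definition R where "R = {foldl step init xs | xs. set xs \<subseteq> Sig}"
definition Lists where "Lists = {L. set L \<subseteq> Pow Q \<and> length L \<le> n}"
definition Cs where "Cs = (\<Pi>\<^sub>E y\<in>Q. \<Pi>\<^sub>E ob\<in>Obl. {..<snd ob})"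
definition Struct where "Struct = Lists \<times> Cs \<times> {1..2*n+1}"

lemma arun_foldl: "arun w m = foldl step init (map w [0..<m])"
  by (induction m) simp_all

lemma arun_R: "\<forall>i. w i \<in> Sig \<Longrightarrow> arun w m \<in> R"
proof -
  assume w: "\<forall>i. w i \<in> Sig"
  have "set (map w [0..<m]) \<subseteq> Sig" using w by auto
  then show ?thesis unfolding arun_foldl R_def by blast
qed

lemma init_R: "init \<in> R"
  unfolding R_def by (intro CollectI exI[of _ "[]"]) simp

lemma R_step: "s \<in> R \<Longrightarrow> a \<in> Sig \<Longrightarrow> step s a \<in> R"
proof -
  assume "s \<in> R" "a \<in> Sig"
  then obtain xs where xs: "s = foldl step init xs" "set xs \<subseteq> Sig" by (auto simp: R_def)
  have e: "step s a = foldl step init (xs @ [a])" using xs(1) by simp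
  have "set (xs @ [a]) \<subseteq> Sig" using xs(2) \<open>a \<in> Sig\<close> by simp
  then show ?thesis unfolding R_def mem_Collect_eq using e by blast
qed

lemma cv_ext: "ob \<notin> Obl \<Longrightarrow> cv p i ob = undefined"
  by (cases i) (simp_all add: cnew_def)

lemma czero_Cs: "czero Obl \<in> (\<Pi>\<^sub>E ob\<in>Obl. {..<snd ob})"
  using obl_pos by (auto simp: czero_def PiE_iff extensional_def)

lemma arun_Struct: "arun w m \<in> Struct"
proof -
  obtain L c pp where a: "arun w m = (L, c, pp)" by (metis prod.exhaust)
  have L: "L = LL w m" and J: "J w m c" using sim[of w m] a by simp_all
  have inv: "sinv (SS w m) L" using stree.inv[OF stree_inst] L by simp
  have finS: "finite (SS w m)" using SS_Q finQ finite_subset by blast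
  have "length L \<le> card (SS w m)" by (rule sinv_len[OF inv finS])
  also have "\<dots> \<le> n" using SS_Q finQ by (rule card_mono[rotated])
  finally have lenL: "length L \<le> n" .
  have "\<forall>X\<in>set L. X \<subseteq> Q"
  proof
    fix X assume "X \<in> set L"
    then obtain i where "i < length L" "X = L ! i" by (auto simp: in_set_conv_nth)
    then have "X \<subseteq> SS w m" using inv by (simp add: sinv_def)
    then show "X \<subseteq> Q" using SS_Q by blast
  qed
  then have Lin: "L \<in> Lists" using lenL by (auto simp: Lists_def)
  have cin: "c \<in> Cs" unfolding Cs_def
  proof (rule PiE_I)
    fix y assume yQ: "y \<in> Q"
    show "c y \<in> (\<Pi>\<^sub>E ob\<in>Obl. {..<snd ob})"
    proof (cases "y \<in> SS w m")
      case True
      then obtain p where p: "vp w m p" "p m = y" by (auto simp: SS_def)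
      have cy: "c y = cv p m" using J[unfolded J_def] p by blast
      have "cok Obl (cv p m)" using p(1) by (simp add: vp_def)
      then show ?thesis using cy cv_ext by (auto simp: cok_def PiE_iff extensional_def)
    next
      case False
      then have "c y = czero Obl" using J yQ by (simp add: J_def)
      then show ?thesis using czero_Cs by simp
    qed
  next
    fix y assume "y \<notin> Q"
    then have "y \<notin> SS w m" using SS_Q by blast
    then show "c y = undefined" using J \<open>y \<notin> Q\<close> by (simp add: J_def)
  qed
  have pin: "pp \<in> {1..2*n+1}"
  proof (cases m)
    case 0 then show ?thesis using a by (simp add: init_def)
  next
    case (Suc m')
    have "pp = PP w m'" using prio_sim[of w m'] a Suc by simp
    then show ?thesis using stree.pr_pos[OF stree_inst] stree.pr_bound[OF stree_inst] by auto
  qed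
  show ?thesis using a Lin cin pin by (simp add: Struct_def)
qed

lemma R_Struct: "R \<subseteq> Struct"
proof
  fix s assume "s \<in> R"
  then obtain xs where xs: "s = foldl step init xs" by (auto simp: R_def)
  define w where "w i = (if i < length xs then xs ! i else undefined)" for i
  have "map w [0..<length xs] = xs" by (rule nth_equalityI) (simp_all add: w_def)
  then have "s = arun w (length xs)" using xs by (simp add: arun_foldl)
  then show "s \<in> Struct" using arun_Struct by simp
qed

lemma geo: "(2::nat) \<le> r \<Longrightarrow> (\<Sum>i\<le>k. r^i) \<le> 2 * r^k"
proof (induction k)
  case 0 then show ?case by simp
next
  case (Suc k)
  have "(\<Sum>i\<le>Suc k. r^i) = (\<Sum>i\<le>k. r^i) + r^Suc k" by simp
  also have "\<dots> \<le> 2 * r^k + r^Suc k" using Suc by simp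
  also have "2 * r^k \<le> r^Suc k" using Suc.prems by simp
  then have "2 * r^k + r^Suc k \<le> 2 * r^Suc k" by simp
  finally show ?case .
qed

lemma four_pow: "2 * k + 1 \<le> (4::nat) ^ k"
proof (induction k)
  case 0 then show ?case by simp
next
  case (Suc k)
  have "(1::nat) \<le> 4 ^ k" by simp
  then show ?case using Suc by simp
qed

lemma finite_Struct: "finite Struct"
proof -
  have "finite Lists" unfolding Lists_def using finite_lists_length_le[of "Pow Q" n] finQ by simp
  moreover have "finite Cs" unfolding Cs_def using finQ finO by (intro finite_PiE) auto
  ultimately show ?thesis unfolding Struct_def by simp
qed

lemma card_Struct: "card Struct \<le> 2 ^ ((n + 1)^2) * (\<Prod>(G, b)\<in>Obl. b + 1) ^ n"
proof -
  define P where "P = (\<Prod>ob\<in>Obl. snd ob)"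
  define P' where "P' = (\<Prod>(G, b)\<in>Obl. b + 1)"
  have cL: "card Lists = (\<Sum>i\<le>n. (2^n)^i)"
    unfolding Lists_def using card_lists_length_le[of "Pow Q" n] finQ by (simp add: card_Pow)
  have cL2: "card Lists \<le> 2 * 2^(n*n)"
  proof (cases "n = 0")
    case True then show ?thesis using cL by simp
  next
    case False
    then have "(2::nat)^1 \<le> 2^n" by (intro power_increasing) auto
    then have "(2::nat) \<le> 2^n" by simp
    from geo[OF this, of n] show ?thesis using cL by (simp add: power_mult)
  qed
  have cC: "card Cs = P ^ n"
  proof -
    have "card (\<Pi>\<^sub>E ob\<in>Obl. {..<snd ob}) = P" unfolding P_def using card_PiE[OF finO, of "\<lambda>ob. {..<snd ob}"] by simp
    then show ?thesis unfolding Cs_def using card_PiE[OF finQ, of "\<lambda>_. \<Pi>\<^sub>E ob\<in>Obl. {..<snd ob}"] by simp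
  qed
  have PP': "P \<le> P'" unfolding P_def P'_def by (rule prod_mono) auto
  have cS: "card Struct = card Lists * (P^n * (2*n+1))"
    unfolding Struct_def using cC by (simp add: card_cartesian_product)
  also have "\<dots> \<le> (2 * 2^(n*n)) * (P'^n * (2*n+1))"
    using cL2 PP' by (intro mult_mono power_mono) simp_all
  also have "\<dots> = (2 * (2*n+1) * 2^(n*n)) * P'^n" by (simp add: algebra_simps)
  also have "\<dots> \<le> (2 * 4^n * 2^(n*n)) * P'^n" using four_pow[of n] by (intro mult_right_mono) simp_all
  also have "2 * 4^n * 2^(n*n) = (2::nat) ^ ((n+1)^2)"
  proof -
    have "(4::nat)^n = 2^(2*n)" by (simp add: power_mult)
    moreover have "(n+1)^2 = n*n + 2*n + 1" by (simp add: power2_eq_square)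
    ultimately show ?thesis by (simp add: power_add)
  qed
  finally show ?thesis unfolding P'_def .
qed

lemma main:
  "\<exists>(Q' :: nat set) q0 \<delta> c.
     dpa_wf Q' Sig q0 \<delta> c \<and>
     (\<forall>w. omega_word Sig w \<longrightarrow>
        (dpa_accepts q0 \<delta> c w \<longleftrightarrow>
           (\<exists>\<rho>. buchi_run Q0 Delta w \<rho> \<and> buchi_accepting F \<rho> \<and>
                (\<forall>(G, b)\<in>Obl. infix_cond \<rho> G b)))) \<and>
     card Q' \<le> 2 ^ ((card Q + 1)^2) * (\<Prod>(G, b)\<in>Obl. b + 1) ^ card Q \<and>
     card (c ` Q') \<le> 2 * card Q + 1"
proof -
  have finR: "finite R" by (rule finite_subset[OF R_Struct finite_Struct])
  from ex_bij_betw_finite_nat[OF finR] obtain h where h: "bij_betw h R {0..<card R}" by blast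
  define Q' where "Q' = {0..<card R}"
  define q0 where "q0 = h init"
  define \<delta> where "\<delta> q a = h (step (inv_into R h q) a)" for q a
  define c where "c q = snd (snd (inv_into R h q))" for q
  have hR: "h ` R = Q'" using h unfolding Q'_def by (simp add: bij_betw_def)
  have injh: "inj_on h R" using h by (simp add: bij_betw_def)
  have inv_in: "inv_into R h q \<in> R" if "q \<in> Q'" for q
    by (rule inv_into_into) (use that hR in simp)
  have wf': "dpa_wf Q' Sig q0 \<delta> c" unfolding dpa_wf_def
  proof (intro conjI ballI)
    show "finite Q'" by (simp add: Q'_def)
    show "q0 \<in> Q'" unfolding q0_def hR[symmetric] using init_R by (rule imageI)
    fix q a assume "q \<in> Q'" "a \<in> Sig"
    then have "step (inv_into R h q) a \<in> R" by (intro R_step inv_in)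
    then show "\<delta> q a \<in> Q'" unfolding \<delta>_def hR[symmetric] by (rule imageI)
  qed
  have run: "dpa_run q0 \<delta> w m = h (arun w m)" if w: "\<forall>i. w i \<in> Sig" for w m
  proof (induction m)
    case 0 then show ?case by (simp add: q0_def)
  next
    case (Suc m)
    have "inv_into R h (h (arun w m)) = arun w m" using injh arun_R[OF w] by simp
    then show ?case using Suc by (simp add: \<delta>_def)
  qed
  have crun: "c (dpa_run q0 \<delta> w m) = snd (snd (arun w m))" if w: "\<forall>i. w i \<in> Sig" for w m
    using run[OF w] injh arun_R[OF w] by (simp add: c_def)
  have acc: "dpa_accepts q0 \<delta> c w \<longleftrightarrow>
           (\<exists>\<rho>. buchi_run Q0 Delta w \<rho> \<and> buchi_accepting F \<rho> \<and> (\<forall>(G, b)\<in>Obl. infix_cond \<rho> G b))"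
    if "omega_word Sig w" for w
  proof -
    have w: "\<forall>i. w i \<in> Sig" using that by (simp add: omega_word_def)
    have "dpa_accepts q0 \<delta> c w \<longleftrightarrow> even (Min {p. \<exists>\<^sub>\<infinity>m. snd (snd (arun w m)) = p})"
      unfolding dpa_accepts_def using crun[OF w] by simp
    then show ?thesis using acc_arun by simp
  qed
  have cardQ: "card Q' \<le> 2 ^ ((card Q + 1)^2) * (\<Prod>(G, b)\<in>Obl. b + 1) ^ card Q"
  proof -
    have "card Q' = card R" by (simp add: Q'_def)
    also have "\<dots> \<le> card Struct" using R_Struct finite_Struct by (rule card_mono[rotated])
    finally show ?thesis using card_Struct by simp
  qed
  have "c ` Q' \<subseteq> {1..2*n+1}"
  proof
    fix p assume "p \<in> c ` Q'"
    then obtain q where q: "q \<in> Q'" "p = c q" by blast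
    have "inv_into R h q \<in> Struct" using inv_in[OF q(1)] R_Struct by blast
    then show "p \<in> {1..2*n+1}" using q(2) unfolding c_def Struct_def by auto
  qed
  then have "card (c ` Q') \<le> card {1..2*n+1}" by (rule card_mono[rotated]) simp
  then have cardc: "card (c ` Q') \<le> 2 * card Q + 1" by simp
  show ?thesis
    apply (rule exI[of _ Q'], rule exI[of _ q0], rule exI[of _ \<delta>], rule exI[of _ c])
    using wf' acc cardQ cardc by simp
qed

end

theorem mainTheorem11:
  fixes Q :: "'q set" and Sig :: "'a set" and Q0 :: "'q set"
    and Delta :: "('q \<times> 'a \<times> 'q) set" and F :: "'q set"
    and Obl :: "('q set \<times> nat) set"
  assumes "buchi_wf Q Sig Q0 Delta F"
    and "non_confluent Q0 Delta"
    and "finite Obl"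
    and "\<forall>(G, b)\<in>Obl. G \<subseteq> Q \<and> b > 0"
  shows "\<exists>(Q' :: nat set) q0 \<delta> c.
           dpa_wf Q' Sig q0 \<delta> c \<and>
           (\<forall>w. omega_word Sig w \<longrightarrow>
              (dpa_accepts q0 \<delta> c w \<longleftrightarrow>
                 (\<exists>\<rho>. buchi_run Q0 Delta w \<rho> \<and> buchi_accepting F \<rho> \<and>
                      (\<forall>(G, b)\<in>Obl. infix_cond \<rho> G b)))) \<and>
           card Q' \<le> 2 ^ ((card Q + 1)^2) * (\<Prod>(G, b)\<in>Obl. b + 1) ^ card Q \<and>
           card (c ` Q') \<le> 2 * card Q + 1"
proof -
  interpret aut Q Sig Q0 Delta F Obl using assms by unfold_locales
  show ?thesis by (rule main)
qed

end
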